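(* Let $\mathcal{A}$ be a von Neumann algebra with unit $I$ and $\tau$ a normal faithful normalized finite trace on $\mathcal{A}$, and let $T\in\mathcal{A}$ be positive with $\tau(T)=1$. Then for all $A,B\in\mathcal{A}$ and all $\alpha,\beta\in\mathbb{C}$: (1) $|\tau(TAB)-\tau(TA)\tau(TB)|\leq \|A-\alpha I\|_4\,\|B-\beta I\|_4\,\|T\|_2$; (2) $|\tau(TAB)-\tau(TA)\tau(TB)|\leq \|A-\alpha I\|_2\,\|B-\beta I\|_2\,\|T\|$; (3) $|\tau(TAB)-\tau(TA)\tau(TB)|\leq \|A-\alpha I\|\,\|B-\beta I\|$.
   Context: A finite trace $\tau$ on a von Neumann algebra is a positive linear functional with $\tau(I)<\infty$ and $\tau(XY)=\tau(YX)$; it is normal if $\sup_i\tau(X_i)=\tau(\sup_i X_i)$ for bounded increasing nets of positive elements, faithful if $\tau(X)=0$ for $X\ge 0$ implies $X=0$, and normalized if $\tau(I)=1$. For $1\le p<\infty$, $\|X\|_p=(\tau(|X|^p))^{1/p}$ with $|X|=(X^*X)^{1/2}$; $\|X\|$ denotes the operator norm. *)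

theory Defs
  imports "HOL-Analysis.Analysis" "HOL-Library.Function_Algebras"
begin

class chilbert = banach +
  fixes scaleC :: "complex \<Rightarrow> 'a \<Rightarrow> 'a"
    and cinner :: "'a \<Rightarrow> 'a \<Rightarrow> complex"
  assumes scaleC_add_right: "scaleC a (x + y) = scaleC a x + scaleC a y"
    and scaleC_add_left: "scaleC (a + b) x = scaleC a x + scaleC b x"
    and scaleC_scaleC: "scaleC a (scaleC b x) = scaleC (a * b) x"
    and scaleC_one: "scaleC 1 x = x"
    and scaleC_of_real: "scaleC (complex_of_real r) x = scaleR r x"
    and cinner_conj: "cinner x y = cnj (cinner y x)"
    and cinner_add_right: "cinner x (y + z) = cinner x y + cinner x z"
    and cinner_scaleC_right: "cinner x (scaleC a y) = a * cinner x y"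
    and cinner_self_norm: "cinner x x = complex_of_real ((norm x)\<^sup>2)"

definition bounded_op :: "('h::chilbert \<Rightarrow> 'h) \<Rightarrow> bool" where
  "bounded_op A \<longleftrightarrow>
     (\<forall>x y. A (x + y) = A x + A y) \<and>
     (\<forall>c x. A (scaleC c x) = scaleC c (A x)) \<and>
     (\<exists>K. \<forall>x. norm (A x) \<le> K * norm x)"

text \<open>Scalar multiple of an operator; \<open>op_scale c id\<close> is \<open>c I\<close>.\<close>
definition op_scale :: "complex \<Rightarrow> ('h::chilbert \<Rightarrow> 'h) \<Rightarrow> ('h \<Rightarrow> 'h)" where
  "op_scale c A = (\<lambda>x. scaleC c (A x))"

definition op_adjoint :: "('h::chilbert \<Rightarrow> 'h) \<Rightarrow> ('h \<Rightarrow> 'h)" where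
  "op_adjoint A = (THE B. \<forall>x y. cinner (A x) y = cinner x (B y))"

definition op_positive :: "('h::chilbert \<Rightarrow> 'h) \<Rightarrow> bool" where
  "op_positive A \<longleftrightarrow> bounded_op A \<and>
     (\<forall>x. cinner x (A x) \<in> \<real> \<and> 0 \<le> Re (cinner x (A x)))"

definition op_le :: "('h::chilbert \<Rightarrow> 'h) \<Rightarrow> ('h \<Rightarrow> 'h) \<Rightarrow> bool" where
  "op_le A B \<longleftrightarrow> op_positive (B - A)"

definition op_selfadjoint :: "('h::chilbert \<Rightarrow> 'h) \<Rightarrow> bool" where
  "op_selfadjoint A \<longleftrightarrow> bounded_op A \<and> op_adjoint A = A"

definition op_is_sup :: "('h::chilbert \<Rightarrow> 'h) set \<Rightarrow> ('h \<Rightarrow> 'h) \<Rightarrow> bool" where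
  "op_is_sup F S \<longleftrightarrow> op_selfadjoint S \<and> (\<forall>A\<in>F. op_le A S) \<and>
     (\<forall>U. op_selfadjoint U \<and> (\<forall>A\<in>F. op_le A U) \<longrightarrow> op_le S U)"

definition commutant :: "('h::chilbert \<Rightarrow> 'h) set \<Rightarrow> ('h \<Rightarrow> 'h) set" where
  "commutant S = {B. bounded_op B \<and> (\<forall>A\<in>S. B \<circ> A = A \<circ> B)}"

definition von_neumann_algebra :: "('h::chilbert \<Rightarrow> 'h) set \<Rightarrow> bool" where
  "von_neumann_algebra M \<longleftrightarrow>
     M \<subseteq> {A. bounded_op A} \<and> id \<in> M \<and>
     (\<forall>A\<in>M. \<forall>B\<in>M. A + B \<in> M \<and> A \<circ> B \<in> M) \<and>
     (\<forall>c. \<forall>A\<in>M. op_scale c A \<in> M) \<and>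
     (\<forall>A\<in>M. op_adjoint A \<in> M) \<and>
     commutant (commutant M) = M"

text \<open>A finite trace: a (complex-valued, hence finite) positive linear functional
on M with tau(XY) = tau(YX).\<close>
definition finite_trace :: "('h::chilbert \<Rightarrow> 'h) set \<Rightarrow> (('h \<Rightarrow> 'h) \<Rightarrow> complex) \<Rightarrow> bool" where
  "finite_trace M \<tau> \<longleftrightarrow>
     (\<forall>A\<in>M. \<forall>B\<in>M. \<tau> (A + B) = \<tau> A + \<tau> B) \<and>
     (\<forall>c. \<forall>A\<in>M. \<tau> (op_scale c A) = c * \<tau> A) \<and>
     (\<forall>A\<in>M. op_positive A \<longrightarrow> \<tau> A \<in> \<real> \<and> 0 \<le> Re (\<tau> A)) \<and>
     (\<forall>X\<in>M. \<forall>Y\<in>M. \<tau> (X \<circ> Y) = \<tau> (Y \<circ> X))"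

text \<open>Normality: for every bounded increasing net of positive elements of M
(equivalently, every nonempty upward directed, norm-bounded family of positive
elements, the net being indexed by itself), tau of the supremum is the supremum
of the values of tau.\<close>
definition normal_functional :: "('h::chilbert \<Rightarrow> 'h) set \<Rightarrow> (('h \<Rightarrow> 'h) \<Rightarrow> complex) \<Rightarrow> bool" where
  "normal_functional M \<tau> \<longleftrightarrow>
     (\<forall>F S. F \<subseteq> M \<and> F \<noteq> {} \<and> (\<forall>A\<in>F. op_positive A) \<and>
        (\<forall>A\<in>F. \<forall>B\<in>F. \<exists>C\<in>F. op_le A C \<and> op_le B C) \<and>
        (\<exists>K. \<forall>A\<in>F. onorm A \<le> K) \<and> op_is_sup F S
        \<longrightarrow> (SUP A\<in>F. Re (\<tau> A)) = Re (\<tau> S))"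

definition faithful_functional :: "('h::chilbert \<Rightarrow> 'h) set \<Rightarrow> (('h \<Rightarrow> 'h) \<Rightarrow> complex) \<Rightarrow> bool" where
  "faithful_functional M \<tau> \<longleftrightarrow> (\<forall>X\<in>M. op_positive X \<and> \<tau> X = 0 \<longrightarrow> X = 0)"

definition normalized_functional :: "(('h::chilbert \<Rightarrow> 'h) \<Rightarrow> complex) \<Rightarrow> bool" where
  "normalized_functional \<tau> \<longleftrightarrow> \<tau> id = 1"

definition op_abs :: "('h::chilbert \<Rightarrow> 'h) \<Rightarrow> ('h \<Rightarrow> 'h)" where
  "op_abs X = (THE Y. op_positive Y \<and> Y \<circ> Y = op_adjoint X \<circ> X)"

text \<open>||X||_p = tau(|X|^p)^{1/p}, for integer exponents p \<ge> 1 (only p = 2, 4 are needed).\<close>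
definition tr_pnorm :: "(('h::chilbert \<Rightarrow> 'h) \<Rightarrow> complex) \<Rightarrow> nat \<Rightarrow> ('h \<Rightarrow> 'h) \<Rightarrow> real" where
  "tr_pnorm \<tau> p X = (Re (\<tau> (op_abs X ^^ p))) powr (1 / real p)"

end

theory Submission
  imports Defs "HOL-Computational_Algebra.Formal_Power_Series"
begin

lemma mult_cnj_cmod: "z * cnj z = complex_of_real ((cmod z)\<^sup>2)"
  by (metis complex_norm_square of_real_power)

lemma cnj_mult_cmod: "cnj z * z = complex_of_real ((cmod z)\<^sup>2)"
  by (metis complex_norm_square of_real_power mult.commute)


lemma scaleC_zero_left[simp]: "scaleC 0 (x::'a::chilbert) = 0"
  by (metis scaleC_of_real of_real_0 scaleR_zero_left)

lemma scaleC_zero_right[simp]: "scaleC a (0::'a::chilbert) = 0"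
  using scaleC_add_right[of a 0 0] by simp

lemma scaleC_minus_left: "scaleC (- a) (x::'a::chilbert) = - scaleC a x"
  using scaleC_add_left[of a "-a" x] by (simp add: eq_neg_iff_add_eq_0 add.commute)

lemma scaleC_minus_right: "scaleC a (- (x::'a::chilbert)) = - scaleC a x"
  using scaleC_add_right[of a x "-x"] by (simp add: eq_neg_iff_add_eq_0 add.commute)

lemma scaleC_diff_right: "scaleC a ((x::'a::chilbert) - y) = scaleC a x - scaleC a y"
  using scaleC_add_right[of a x "-y"] by (simp add: scaleC_minus_right)

lemma scaleC_diff_left: "scaleC (a - b) (x::'a::chilbert) = scaleC a x - scaleC b x"
  using scaleC_add_left[of a "-b" x] by (simp add: scaleC_minus_left)

lemma scaleC_minus1: "scaleC (-1) (x::'a::chilbert) = - x"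
  using scaleC_minus_left[of 1 x] by (simp add: scaleC_one)

lemma cinner_add_left: "cinner ((x::'a::chilbert) + y) z = cinner x z + cinner y z"
  by (metis cinner_conj cinner_add_right complex_cnj_add)

lemma cinner_scaleC_left: "cinner (scaleC a (x::'a::chilbert)) y = cnj a * cinner x y"
  by (metis cinner_conj cinner_scaleC_right complex_cnj_mult complex_cnj_cnj)

lemma cinner_zero_left[simp]: "cinner 0 (y::'a::chilbert) = 0"
  using cinner_add_left[of 0 0 y] by simp

lemma cinner_zero_right[simp]: "cinner (x::'a::chilbert) 0 = 0"
  using cinner_add_right[of x 0 0] by simp

lemma cinner_minus_left: "cinner (- (x::'a::chilbert)) y = - cinner x y"
  using cinner_add_left[of x "-x" y] by (simp add: eq_neg_iff_add_eq_0 add.commute)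

lemma cinner_minus_right: "cinner (x::'a::chilbert) (- y) = - cinner x y"
  using cinner_add_right[of x y "-y"] by (simp add: eq_neg_iff_add_eq_0 add.commute)

lemma cinner_diff_left: "cinner ((x::'a::chilbert) - y) z = cinner x z - cinner y z"
  using cinner_add_left[of x "-y" z] by (simp add: cinner_minus_left)

lemma cinner_diff_right: "cinner (x::'a::chilbert) (y - z) = cinner x y - cinner x z"
  using cinner_add_right[of x y "-z"] by (simp add: cinner_minus_right)

lemma cinner_self_Im[simp]: "Im (cinner (x::'a::chilbert) x) = 0"
  by (simp add: cinner_self_norm)

lemma cinner_self_Re[simp]: "Re (cinner (x::'a::chilbert) x) = (norm x)\<^sup>2"
  by (simp add: cinner_self_norm)

lemma cinner_self_eq0: "cinner (x::'a::chilbert) x = 0 \<longleftrightarrow> x = 0"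
  by (simp add: cinner_self_norm)

lemma cinner_eq0_all: "(\<And>y. cinner y x = 0) \<Longrightarrow> (x::'a::chilbert) = 0"
  using cinner_self_eq0 by blast

lemma norm_scaleC: "norm (scaleC a (x::'a::chilbert)) = cmod a * norm x"
proof -
  have "complex_of_real ((norm (scaleC a x))\<^sup>2) = cnj a * a * complex_of_real ((norm x)\<^sup>2)"
    by (metis cinner_self_norm cinner_scaleC_left cinner_scaleC_right mult.assoc)
  also have "cnj a * a = complex_of_real ((cmod a)\<^sup>2)"
    by (metis complex_norm_square mult.commute of_real_power)
  finally have "(norm (scaleC a x))\<^sup>2 = (cmod a * norm x)\<^sup>2"
    by (metis of_real_eq_iff of_real_mult power_mult_distrib)
  then show ?thesis by (simp add: power2_eq_iff_nonneg)
qed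

lemma cs_scalar:
  fixes P R :: real and a b :: complex
  assumes im: "\<And>c. Im (c*a + cnj c * b) = 0"
    and pos: "\<And>c. 0 \<le> P + Re (c*a + cnj c * b) + (cmod c)\<^sup>2 * R"
    and P: "P \<ge> 0" and R: "R \<ge> 0"
  shows "(cmod a)\<^sup>2 \<le> P * R" and "b = cnj a"
proof -
  have 1: "Im a + Im b = 0" using im[of 1] by simp
  have 2: "Re a - Re b = 0" using im[of \<i>] by simp
  show b: "b = cnj a" using 1 2 by (simp add: complex_eq_iff)
  have key: "0 \<le> P + 2 * Re (c*a) + (cmod c)\<^sup>2 * R" for c
    using pos[of c] unfolding b by (simp add: mult.commute)
  show "(cmod a)\<^sup>2 \<le> P * R"
  proof (cases "R > 0")
    case True
    define c where "c = - cnj a / complex_of_real R"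
    have ca: "c * a = - complex_of_real ((cmod a)\<^sup>2 / R)"
      unfolding c_def by (simp add: cnj_mult_cmod)
    have cc: "cmod c = cmod a / R"
      unfolding c_def using True by (simp add: norm_divide)
    have "0 \<le> P + 2 * (- ((cmod a)\<^sup>2 / R)) + (cmod a / R)\<^sup>2 * R"
      using key[of c] unfolding ca cc by simp
    also have "(cmod a / R)\<^sup>2 * R = (cmod a)\<^sup>2 / R"
      using True by (simp add: power2_eq_square)
    finally have "0 \<le> P - (cmod a)\<^sup>2 / R" by simp
    then show ?thesis using True by (simp add: field_simps)
  next
    case False
    then have R0: "R = 0" using R by simp
    show ?thesis
    proof (cases "a = 0")
      case True then show ?thesis using P R by simp
    next
      case False
      define c where "c = - complex_of_real ((P + 1) / (2 * (cmod a)\<^sup>2)) * cnj a"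
      have "c * a = - complex_of_real ((P + 1) / (2 * (cmod a)\<^sup>2) * (cmod a)\<^sup>2)"
        unfolding c_def by (simp add: cnj_mult_cmod mult.assoc)
      also have "(P + 1) / (2 * (cmod a)\<^sup>2) * (cmod a)\<^sup>2 = (P + 1) / 2"
        using False by simp
      finally have "c * a = - complex_of_real ((P + 1) / 2)" .
      then have "0 \<le> P + 2 * (- ((P + 1) / 2))" using key[of c] R0 by simp
      then show ?thesis by simp
    qed
  qed
qed

lemma cinner_cs: "cmod (cinner (x::'a::chilbert) y) \<le> norm x * norm y"
proof -
  have exp: "cinner (x + scaleC c y) (x + scaleC c y)
     = cinner x x + (c * cinner x y + cnj c * cinner y x) + cnj c * c * cinner y y" for c
    by (simp add: cinner_add_left cinner_add_right cinner_scaleC_left cinner_scaleC_right algebra_simps)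
  have "(cmod (cinner x y))\<^sup>2 \<le> (norm x)\<^sup>2 * (norm y)\<^sup>2"
  proof (rule cs_scalar(1))
    fix c
    have "Im (cinner (x + scaleC c y) (x + scaleC c y)) = 0" by simp
    then show "Im (c * cinner x y + cnj c * cinner y x) = 0"
      unfolding exp by (simp add: cnj_mult_cmod cinner_self_norm)
    have "0 \<le> Re (cinner (x + scaleC c y) (x + scaleC c y))" by simp
    then show "0 \<le> (norm x)\<^sup>2 + Re (c * cinner x y + cnj c * cinner y x) + (cmod c)\<^sup>2 * (norm y)\<^sup>2"
      unfolding exp by (simp add: cnj_mult_cmod cinner_self_norm)
  qed auto
  then have "(cmod (cinner x y))\<^sup>2 \<le> (norm x * norm y)\<^sup>2" by (simp add: power_mult_distrib)
  then show ?thesis by (simp add: power2_le_iff_abs_le)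
qed

lemma bounded_opD:
  assumes "bounded_op A"
  shows "A (x + y) = A x + A y" "A (scaleC c x) = scaleC c (A x)"
  using assms unfolding bounded_op_def by auto

lemma bounded_op_linear:
  fixes A :: "'a::chilbert \<Rightarrow> 'a"
  assumes "bounded_op A" shows "bounded_linear A"
proof -
  from assms obtain K where K: "\<And>x. norm (A x) \<le> K * norm x" unfolding bounded_op_def by blast
  show ?thesis
  proof (rule bounded_linear_intro)
    show "A (x + y) = A x + A y" for x y using bounded_opD[OF assms] by simp
    show "A (r *\<^sub>R x) = r *\<^sub>R A x" for r x
      using bounded_opD(2)[OF assms, of "complex_of_real r" x] by (simp add: scaleC_of_real)
    show "norm (A x) \<le> norm x * K" for x using K[of x] by (simp add: mult.commute)
  qed
qed

lemma op_norm_bound: "bounded_op A \<Longrightarrow> norm (A x) \<le> onorm A * norm x"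
  by (rule onorm[OF bounded_op_linear])

lemma onorm_nonneg': "bounded_op A \<Longrightarrow> 0 \<le> onorm A"
  by (rule onorm_pos_le[OF bounded_op_linear])

lemma bounded_op_zero: "bounded_op A \<Longrightarrow> A 0 = 0"
  by (metis bounded_linear.linear bounded_op_linear linear_0)

lemma bounded_op_minus: "bounded_op A \<Longrightarrow> A (- x) = - A x"
  by (metis bounded_linear.linear bounded_op_linear linear_neg)

lemma bounded_op_diff: "bounded_op A \<Longrightarrow> A (x - y) = A x - A y"
  by (metis bounded_linear.linear bounded_op_linear linear_diff)

lemma bounded_op_sum: "bounded_op A \<Longrightarrow> A (sum f S) = (\<Sum>i\<in>S. A (f i))"
  using linear_sum[OF bounded_linear.linear[OF bounded_op_linear]] by simp

lemma bounded_opI: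
  fixes A :: "'a::chilbert \<Rightarrow> 'a"
  assumes "\<And>x y. A (x + y) = A x + A y" "\<And>c x. A (scaleC c x) = scaleC c (A x)"
    "\<And>x. norm (A x) \<le> K * norm x"
  shows "bounded_op A"
  using assms unfolding bounded_op_def by blast

lemma bounded_op_id: "bounded_op (id :: 'a::chilbert \<Rightarrow> 'a)"
  by (rule bounded_opI[where K=1]) auto

lemma bounded_op_comp:
  assumes "bounded_op A" "bounded_op B" shows "bounded_op (A \<circ> B)"
proof (rule bounded_opI[where K="onorm A * onorm B"])
  show "(A \<circ> B) (x + y) = (A \<circ> B) x + (A \<circ> B) y" for x y using bounded_opD[OF assms(1)] bounded_opD[OF assms(2)] by simp
  show "(A \<circ> B) (scaleC c x) = scaleC c ((A \<circ> B) x)" for c x using bounded_opD[OF assms(1)] bounded_opD[OF assms(2)] by simp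
  show "norm ((A \<circ> B) x) \<le> onorm A * onorm B * norm x" for x
  proof -
    have "norm (A (B x)) \<le> onorm A * norm (B x)" by (rule op_norm_bound[OF assms(1)])
    also have "\<dots> \<le> onorm A * (onorm B * norm x)"
      by (rule mult_left_mono[OF op_norm_bound[OF assms(2)] onorm_nonneg'[OF assms(1)]])
    finally show ?thesis by (simp add: mult.assoc)
  qed
qed

lemma bounded_op_add:
  assumes "bounded_op A" "bounded_op B" shows "bounded_op (A + B)"
proof (rule bounded_opI[where K="onorm A + onorm B"])
  show "(A + B) (x + y) = (A + B) x + (A + B) y" for x y using bounded_opD[OF assms(1)] bounded_opD[OF assms(2)] by (simp add: algebra_simps)
  show "(A + B) (scaleC c x) = scaleC c ((A + B) x)" for c x using bounded_opD[OF assms(1)] bounded_opD[OF assms(2)] by (simp add: scaleC_add_right)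
  show "norm ((A + B) x) \<le> (onorm A + onorm B) * norm x" for x
    using norm_triangle_ineq[of "A x" "B x"] op_norm_bound[OF assms(1), of x] op_norm_bound[OF assms(2), of x]
    by (simp add: algebra_simps)
qed

lemma bounded_op_scale:
  assumes "bounded_op A" shows "bounded_op (op_scale c A)"
proof (rule bounded_opI[where K="cmod c * onorm A"])
  show "op_scale c A (x + y) = op_scale c A x + op_scale c A y" for x y
    using bounded_opD[OF assms] by (simp add: op_scale_def scaleC_add_right)
  show "op_scale c A (scaleC d x) = scaleC d (op_scale c A x)" for d x
    using bounded_opD[OF assms] by (simp add: op_scale_def scaleC_scaleC mult.commute)
  show "norm (op_scale c A x) \<le> cmod c * onorm A * norm x" for x
    using op_norm_bound[OF assms, of x] by (simp add: op_scale_def norm_scaleC mult.assoc mult_left_mono)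
qed

lemma op_scale_apply[simp]: "op_scale c A x = scaleC c (A x)"
  by (simp add: op_scale_def)

lemma minus_op_scale: "(A :: 'a::chilbert \<Rightarrow> 'a) - B = A + op_scale (-1) B"
  by (rule ext) (simp add: scaleC_minus1)

lemma bounded_op_diff_op:
  assumes "bounded_op A" "bounded_op B" shows "bounded_op (A - B)"
  unfolding minus_op_scale by (intro bounded_op_add bounded_op_scale assms)

section \<open>Riesz representation\<close>

lemma cinner_ext: "(\<And>x. cinner x u = cinner x (v::'a::chilbert)) \<Longrightarrow> u = v"
  using cinner_eq0_all[of "u - v"] by (simp add: cinner_diff_right)

lemma parallelogram:
  "(norm ((x::'a::chilbert) + y))\<^sup>2 + (norm (x - y))\<^sup>2 = 2 * (norm x)\<^sup>2 + 2 * (norm y)\<^sup>2"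
proof -
  have "cinner (x + y) (x + y) + cinner (x - y) (x - y) = 2 * cinner x x + 2 * cinner y y"
    by (simp add: cinner_add_left cinner_add_right cinner_diff_left cinner_diff_right)
  then have "Re (cinner (x + y) (x + y) + cinner (x - y) (x - y)) = Re (2 * cinner x x + 2 * cinner y y)"
    by simp
  then show ?thesis by simp
qed

lemma riesz:
  fixes f :: "'a::chilbert \<Rightarrow> complex"
  assumes add: "\<And>x y. f (x + y) = f x + f y"
    and sc: "\<And>c x. f (scaleC c x) = c * f x"
    and bd: "\<And>x. cmod (f x) \<le> K * norm x"
  shows "\<exists>z. \<forall>x. f x = cinner z x"
proof (cases "\<forall>x. f x = 0")
  case True then show ?thesis by (intro exI[of _ 0]) simp
next
  case False
  then obtain u where u: "f u \<noteq> 0" by blast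
  have blf: "bounded_linear f"
  proof (rule bounded_linear_intro)
    show "f (x + y) = f x + f y" for x y by (rule add)
    show "f (r *\<^sub>R x) = r *\<^sub>R f x" for r x
      using sc[of "complex_of_real r" x] by (simp add: scaleC_of_real scaleR_conv_of_real)
    show "norm (f x) \<le> norm x * K" for x using bd[of x] by (simp add: mult.commute)
  qed
  define E where "E = {x. f x = 1}"
  have u1: "scaleC (1 / f u) u \<in> E" unfolding E_def using u by (simp add: sc)
  define d where "d = Inf (norm ` E)"
  have bdd: "bdd_below (norm ` E)" by (rule bdd_belowI[of _ 0]) auto
  have dle: "d \<le> norm x" if "x \<in> E" for x
    unfolding d_def using that bdd by (simp add: cInf_lower)
  have d0: "0 \<le> d" unfolding d_def using u1 by (intro cInf_greatest) auto
  have mid: "scaleC (1/2) (x + y) \<in> E" if "x \<in> E" "y \<in> E" for x y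
    using that unfolding E_def by (simp add: sc add)
  have "\<exists>k. k \<in> E \<and> norm k < d + 1 / (real n + 1)" for n
  proof -
    have "Inf (norm ` E) < d + 1 / (real n + 1)" unfolding d_def by simp
    then obtain t where "t \<in> norm ` E" "t < d + 1 / (real n + 1)"
      using cInf_lessD[of "norm ` E"] u1 by blast
    then show ?thesis by blast
  qed
  then obtain k where kE: "\<And>n. k n \<in> E" and kn: "\<And>n. norm (k n) < d + 1 / (real n + 1)"
    by metis
  have sq: "(norm (k n))\<^sup>2 \<le> d\<^sup>2 + (2 * d + 1) / (real n + 1)" for n
  proof -
    define e where "e = 1 / (real n + 1)"
    have e: "0 < e" "e \<le> 1" unfolding e_def by auto
    have "(norm (k n))\<^sup>2 \<le> (d + e)\<^sup>2"
      using kn[of n] unfolding e_def by (intro power_mono) auto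
    also have "\<dots> = d\<^sup>2 + 2 * d * e + e * e"
      by (simp add: power2_eq_square algebra_simps)
    finally have A: "(norm (k n))\<^sup>2 \<le> d\<^sup>2 + 2 * d * e + e * e" .
    have B: "e * e \<le> 1 * e" using e by (intro mult_right_mono) auto
    have C: "(2 * d + 1) / (real n + 1) = 2 * d * e + e" unfolding e_def by (simp add: field_simps)
    show ?thesis using A B C by linarith
  qed
  have diff: "(norm (k n - k m))\<^sup>2 \<le> 2 * ((2 * d + 1) / (real n + 1)) + 2 * ((2 * d + 1) / (real m + 1))" for n m
  proof -
    have "d \<le> norm (scaleC (1/2) (k n + k m))" by (rule dle[OF mid[OF kE kE]])
    also have "\<dots> = norm (k n + k m) / 2" by (simp add: norm_scaleC)
    finally have "2 * d \<le> norm (k n + k m)" by simp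
    then have "(2 * d)\<^sup>2 \<le> (norm (k n + k m))\<^sup>2" using d0 by (intro power_mono) auto
    then have "4 * d\<^sup>2 \<le> (norm (k n + k m))\<^sup>2" by (simp add: power_mult_distrib)
    then show ?thesis using parallelogram[of "k n" "k m"] sq[of n] sq[of m] by linarith
  qed
  have "Cauchy k"
  proof (rule metric_CauchyI)
    fix e :: real assume e: "e > 0"
    obtain N :: nat where N: "4 * (2 * d + 1) / e\<^sup>2 < real N"
      using reals_Archimedean2 by blast
    show "\<exists>M. \<forall>m\<ge>M. \<forall>n\<ge>M. dist (k m) (k n) < e"
    proof (intro exI allI impI)
      fix m n assume mn: "N \<le> m" "N \<le> n"
      have pos: "0 < 2 * d + 1" using d0 by simp
      have bnd: "(2 * d + 1) / (real j + 1) \<le> (2 * d + 1) / (real N + 1)" if "N \<le> j" for j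
        using that pos by (intro divide_left_mono) auto
      have "(dist (k m) (k n))\<^sup>2 \<le> 4 * ((2 * d + 1) / (real N + 1))"
        using diff[of m n] bnd[OF mn(1)] bnd[OF mn(2)] unfolding dist_norm by linarith
      also have "\<dots> < e\<^sup>2"
      proof -
        have "4 * (2 * d + 1) < e\<^sup>2 * (real N + 1)"
          using N e by (simp add: field_simps) (smt (verit) zero_less_power)
        then show ?thesis using pos by (simp add: field_simps)
      qed
      finally have "(dist (k m) (k n))\<^sup>2 < e\<^sup>2" .
      then show "dist (k m) (k n) < e" using e by (simp add: power_less_imp_less_base)
    qed
  qed
  then obtain w where kw: "k \<longlonglongrightarrow> w" using Cauchy_convergent_iff convergent_def by blast
  have "(\<lambda>n. f (k n)) \<longlonglongrightarrow> f w" by (rule bounded_linear.tendsto[OF blf kw])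
  moreover have "(\<lambda>n. f (k n)) = (\<lambda>n. 1)" using kE unfolding E_def by auto
  ultimately have fw: "f w = 1" using LIMSEQ_const_iff by metis
  have wmin: "norm w \<le> norm x" if "x \<in> E" for x
  proof -
    have "(\<lambda>n. norm (k n)) \<longlonglongrightarrow> norm w" by (rule tendsto_norm[OF kw])
    moreover have "(\<lambda>n. d + 1 / (real n + 1)) \<longlonglongrightarrow> d + 0"
    proof (intro tendsto_add tendsto_const)
      show "(\<lambda>n. 1 / (real n + 1)) \<longlonglongrightarrow> 0"
        using LIMSEQ_inverse_real_of_nat by (simp add: inverse_eq_divide add.commute)
    qed
    ultimately have "norm w \<le> d + 0"
      using kn by (intro LIMSEQ_le[where X="\<lambda>n. norm (k n)"]) (auto intro: less_imp_le)
    then show ?thesis using dle[OF that] by simp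
  qed
  have w0: "w \<noteq> 0" using fw blf by (metis add add_cancel_right_right zero_neq_one)
  have orth: "cinner w y = 0" if fy: "f y = 0" for y
  proof -
    have exp: "cinner (w + scaleC c y) (w + scaleC c y)
       = cinner w w + (c * cinner w y + cnj c * cinner y w) + cnj c * c * cinner y y" for c
      by (simp add: cinner_add_left cinner_add_right cinner_scaleC_left cinner_scaleC_right algebra_simps)
    have "(cmod (cinner w y))\<^sup>2 \<le> 0 * (norm y)\<^sup>2"
    proof (rule cs_scalar(1))
      fix c
      have "Im (cinner (w + scaleC c y) (w + scaleC c y)) = 0" by simp
      then show "Im (c * cinner w y + cnj c * cinner y w) = 0"
        unfolding exp by (simp add: cnj_mult_cmod cinner_self_norm)
      have inE: "w + scaleC c y \<in> E" unfolding E_def using fw fy by (simp add: add sc)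
      have "(norm w)\<^sup>2 \<le> (norm (w + scaleC c y))\<^sup>2" using wmin[OF inE] by (simp add: power_mono)
      also have "\<dots> = Re (cinner (w + scaleC c y) (w + scaleC c y))" by simp
      finally show "0 \<le> 0 + Re (c * cinner w y + cnj c * cinner y w) + (cmod c)\<^sup>2 * (norm y)\<^sup>2"
        unfolding exp by (simp add: cnj_mult_cmod cinner_self_norm)
    qed auto
    then show ?thesis by simp
  qed
  have nw: "0 < (norm w)\<^sup>2" using w0 by simp
  show ?thesis
  proof (intro exI allI)
    fix x
    have "f (x - scaleC (f x) w) = 0"
      using fw linear_diff[OF bounded_linear.linear[OF blf]] by (simp add: sc)
    then have "cinner w (x - scaleC (f x) w) = 0" by (rule orth)
    then have "cinner w x = f x * complex_of_real ((norm w)\<^sup>2)"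
      by (simp add: cinner_diff_right cinner_scaleC_right cinner_self_norm)
    then have "f x = cinner w x / complex_of_real ((norm w)\<^sup>2)" using nw by simp
    also have "\<dots> = cinner (scaleC (complex_of_real (1 / (norm w)\<^sup>2)) w) x"
      by (simp add: cinner_scaleC_left divide_inverse mult.commute)
    finally show "f x = cinner (scaleC (complex_of_real (1 / (norm w)\<^sup>2)) w) x" .
  qed
qed

section \<open>Adjoints\<close>

lemma adjoint_exists:
  fixes A :: "'a::chilbert \<Rightarrow> 'a"
  assumes A: "bounded_op A"
  shows "\<exists>B. \<forall>x y. cinner (A x) y = cinner x (B y)"
proof -
  from A obtain K where K: "\<And>x. norm (A x) \<le> K * norm x" unfolding bounded_op_def by blast
  have "\<exists>z. \<forall>x. cinner y (A x) = cinner z x" for y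
  proof (rule riesz[where K="norm y * K"])
    show "cinner y (A (x1 + x2)) = cinner y (A x1) + cinner y (A x2)" for x1 x2
      using bounded_opD(1)[OF A] by (simp add: cinner_add_right)
    show "cinner y (A (scaleC c x)) = c * cinner y (A x)" for c x
      using bounded_opD(2)[OF A] by (simp add: cinner_scaleC_right)
    show "cmod (cinner y (A x)) \<le> norm y * K * norm x" for x
    proof -
      have "cmod (cinner y (A x)) \<le> norm y * norm (A x)" by (rule cinner_cs)
      also have "\<dots> \<le> norm y * (K * norm x)" by (rule mult_left_mono[OF K]) simp
      finally show ?thesis by (simp add: mult.assoc)
    qed
  qed
  then obtain Bf where Bf: "\<And>y x. cinner y (A x) = cinner (Bf y) x" by metis
  show ?thesis
  proof (intro exI allI)
    fix x y
    have "cinner (A x) y = cnj (cinner y (A x))" by (rule cinner_conj)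
    also have "\<dots> = cnj (cinner (Bf y) x)" by (simp add: Bf)
    also have "\<dots> = cinner x (Bf y)" by (metis cinner_conj)
    finally show "cinner (A x) y = cinner x (Bf y)" .
  qed
qed

lemma adjoint_unique:
  assumes "\<forall>x y. cinner (A x) y = cinner x (B y)" "\<forall>x y. cinner (A x) y = cinner x (C y)"
  shows "B = (C :: 'a::chilbert \<Rightarrow> 'a)"
  using assms by (intro ext cinner_ext) metis

lemma adj_prop:
  fixes A :: "'a::chilbert \<Rightarrow> 'a"
  assumes "bounded_op A" shows "cinner (A x) y = cinner x (op_adjoint A y)"
proof -
  have "\<exists>!B. \<forall>x y. cinner (A x) y = cinner x (B y)"
    using adjoint_exists[OF assms] adjoint_unique by blast
  then have "\<forall>x y. cinner (A x) y = cinner x (op_adjoint A y)"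
    unfolding op_adjoint_def by (rule theI')
  then show ?thesis by blast
qed

lemma adj_prop2:
  fixes A :: "'a::chilbert \<Rightarrow> 'a"
  assumes "bounded_op A" shows "cinner x (A y) = cinner (op_adjoint A x) y"
  by (metis adj_prop[OF assms] cinner_conj)

lemma adj_eqI:
  fixes A :: "'a::chilbert \<Rightarrow> 'a"
  assumes "bounded_op A" "\<And>x y. cinner (A x) y = cinner x (B y)"
  shows "op_adjoint A = B"
  using adj_prop[OF assms(1)] assms(2) by (intro adjoint_unique) auto

lemma adj_bounded:
  fixes A :: "'a::chilbert \<Rightarrow> 'a"
  assumes A: "bounded_op A" shows "bounded_op (op_adjoint A)"
proof (rule bounded_opI[where K="onorm A"])
  let ?B = "op_adjoint A"
  show "?B (x + y) = ?B x + ?B y" for x y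
    by (rule cinner_ext) (simp add: adj_prop[OF A, symmetric] cinner_add_right)
  show "?B (scaleC c x) = scaleC c (?B x)" for c x
    by (rule cinner_ext) (simp add: adj_prop[OF A, symmetric] cinner_scaleC_right)
  show "norm (?B y) \<le> onorm A * norm y" for y
  proof (cases "?B y = 0")
    case True then show ?thesis using onorm_nonneg'[OF A] by simp
  next
    case False
    have "(norm (?B y))\<^sup>2 = Re (cinner (?B y) (?B y))" by simp
    also have "cinner (?B y) (?B y) = cinner (A (?B y)) y" by (simp add: adj_prop[OF A])
    also have "Re (cinner (A (?B y)) y) \<le> cmod (cinner (A (?B y)) y)" by (rule complex_Re_le_cmod)
    also have "\<dots> \<le> norm (A (?B y)) * norm y" by (rule cinner_cs)
    also have "\<dots> \<le> onorm A * norm (?B y) * norm y"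
      by (rule mult_right_mono[OF op_norm_bound[OF A]]) simp
    finally have "norm (?B y) * norm (?B y) \<le> norm (?B y) * (onorm A * norm y)"
      by (simp add: power2_eq_square mult_ac)
    then show ?thesis using False by simp
  qed
qed

lemma adj_adj:
  fixes A :: "'a::chilbert \<Rightarrow> 'a"
  assumes A: "bounded_op A" shows "op_adjoint (op_adjoint A) = A"
  by (rule adj_eqI[OF adj_bounded[OF A]]) (simp add: adj_prop2[OF A])

lemma adj_comp:
  fixes A B :: "'a::chilbert \<Rightarrow> 'a"
  assumes A: "bounded_op A" and B: "bounded_op B"
  shows "op_adjoint (A \<circ> B) = op_adjoint B \<circ> op_adjoint A"
  by (rule adj_eqI[OF bounded_op_comp[OF A B]]) (simp add: adj_prop[OF A] adj_prop[OF B])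

lemma adj_add:
  fixes A B :: "'a::chilbert \<Rightarrow> 'a"
  assumes A: "bounded_op A" and B: "bounded_op B"
  shows "op_adjoint (A + B) = op_adjoint A + op_adjoint B"
  by (rule adj_eqI[OF bounded_op_add[OF A B]])
    (simp add: adj_prop[OF A] adj_prop[OF B] cinner_add_left cinner_add_right)

lemma adj_scale:
  fixes A :: "'a::chilbert \<Rightarrow> 'a"
  assumes A: "bounded_op A"
  shows "op_adjoint (op_scale c A) = op_scale (cnj c) (op_adjoint A)"
  by (rule adj_eqI[OF bounded_op_scale[OF A]])
    (simp add: adj_prop[OF A] cinner_scaleC_left cinner_scaleC_right)

lemma adj_id: "op_adjoint (id :: 'a::chilbert \<Rightarrow> 'a) = id"
  by (rule adj_eqI[OF bounded_op_id]) simp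

lemma adj_diff:
  fixes A B :: "'a::chilbert \<Rightarrow> 'a"
  assumes A: "bounded_op A" and B: "bounded_op B"
  shows "op_adjoint (A - B) = op_adjoint A - op_adjoint B"
  unfolding minus_op_scale using A B
  by (simp add: adj_add adj_scale bounded_op_scale)

lemma onorm_adj_le:
  fixes A :: "'a::chilbert \<Rightarrow> 'a"
  assumes A: "bounded_op A" shows "onorm (op_adjoint A) \<le> onorm A"
proof (rule onorm_bound)
  show "0 \<le> onorm A" by (rule onorm_nonneg'[OF A])
  fix y
  have "bounded_op (op_adjoint A)" by (rule adj_bounded[OF A])
  then obtain K where "\<forall>x. norm (op_adjoint A x) \<le> K * norm x" unfolding bounded_op_def by blast
  show "norm (op_adjoint A y) \<le> onorm A * norm y"
  proof (cases "op_adjoint A y = 0")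
    case True then show ?thesis using onorm_nonneg'[OF A] by simp
  next
    case False
    let ?B = "op_adjoint A"
    have "(norm (?B y))\<^sup>2 = Re (cinner (?B y) (?B y))" by simp
    also have "cinner (?B y) (?B y) = cinner (A (?B y)) y" by (simp add: adj_prop[OF A])
    also have "Re (cinner (A (?B y)) y) \<le> cmod (cinner (A (?B y)) y)" by (rule complex_Re_le_cmod)
    also have "\<dots> \<le> norm (A (?B y)) * norm y" by (rule cinner_cs)
    also have "\<dots> \<le> onorm A * norm (?B y) * norm y"
      by (rule mult_right_mono[OF op_norm_bound[OF A]]) simp
    finally have "norm (?B y) * norm (?B y) \<le> norm (?B y) * (onorm A * norm y)"
      by (simp add: power2_eq_square mult_ac)
    then show ?thesis using False by simp
  qed
qed

lemma pos_form:
  fixes A :: "'a::chilbert \<Rightarrow> 'a"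
  assumes P: "op_positive A"
  shows "(cmod (cinner x (A y)))\<^sup>2 \<le> Re (cinner x (A x)) * Re (cinner y (A y))"
    and "cinner y (A x) = cnj (cinner x (A y))"
proof -
  have A: "bounded_op A" using P unfolding op_positive_def by blast
  have pos: "Im (cinner z (A z)) = 0 \<and> 0 \<le> Re (cinner z (A z))" for z
    using P unfolding op_positive_def by (auto simp: complex_is_Real_iff)
  have exp: "cinner (x + scaleC c y) (A (x + scaleC c y))
     = cinner x (A x) + (c * cinner x (A y) + cnj c * cinner y (A x)) + cnj c * c * cinner y (A y)" for c
    using bounded_opD[OF A]
    by (simp add: cinner_add_left cinner_add_right cinner_scaleC_left cinner_scaleC_right algebra_simps)
  have im: "Im (c * cinner x (A y) + cnj c * cinner y (A x)) = 0" for c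
    using pos[of "x + scaleC c y"] pos[of x] pos[of y] unfolding exp by (simp add: cnj_mult_cmod)
  have ps: "0 \<le> Re (cinner x (A x)) + Re (c * cinner x (A y) + cnj c * cinner y (A x))
             + (cmod c)\<^sup>2 * Re (cinner y (A y))" for c
    using pos[of "x + scaleC c y"] pos[of x] pos[of y] unfolding exp by (simp add: cnj_mult_cmod)
  show "(cmod (cinner x (A y)))\<^sup>2 \<le> Re (cinner x (A x)) * Re (cinner y (A y))"
    by (rule cs_scalar(1)[OF im ps]) (use pos in auto)
  show "cinner y (A x) = cnj (cinner x (A y))"
    by (rule cs_scalar(2)[OF im ps]) (use pos in auto)
qed

lemma pos_bounded: "op_positive A \<Longrightarrow> bounded_op A"
  unfolding op_positive_def by blast

lemma pos_Im: "op_positive A \<Longrightarrow> Im (cinner x (A x)) = 0"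
  unfolding op_positive_def by (auto simp: complex_is_Real_iff)

lemma pos_Re: "op_positive A \<Longrightarrow> 0 \<le> Re (cinner x (A x))"
  unfolding op_positive_def by auto

lemma pos_selfadj:
  fixes A :: "'a::chilbert \<Rightarrow> 'a"
  assumes P: "op_positive A" shows "op_adjoint A = A"
proof (rule adj_eqI[OF pos_bounded[OF P]])
  fix x y
  show "cinner (A x) y = cinner x (A y)"
    using pos_form(2)[OF P, of y x] by (metis cinner_conj)
qed

lemma pos_zero:
  fixes A :: "'a::chilbert \<Rightarrow> 'a"
  assumes P: "op_positive A" and z: "Re (cinner x (A x)) = 0" shows "A x = 0"
proof -
  have "(cmod (cinner (A x) (A x)))\<^sup>2 \<le> Re (cinner (A x) (A (A x))) * Re (cinner x (A x))"
    by (rule pos_form(1)[OF P])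
  then have "cinner (A x) (A x) = 0" using z by simp
  then show ?thesis by (simp add: cinner_self_eq0)
qed

lemma pos_le_onorm:
  fixes A :: "'a::chilbert \<Rightarrow> 'a"
  assumes A: "bounded_op A" shows "Re (cinner x (A x)) \<le> onorm A * (norm x)\<^sup>2"
proof -
  have "Re (cinner x (A x)) \<le> cmod (cinner x (A x))" by (rule complex_Re_le_cmod)
  also have "\<dots> \<le> norm x * norm (A x)" by (rule cinner_cs)
  also have "\<dots> \<le> norm x * (onorm A * norm x)" by (rule mult_left_mono[OF op_norm_bound[OF A]]) simp
  finally show ?thesis by (simp add: power2_eq_square mult_ac)
qed

lemma positiveI:
  fixes A :: "'a::chilbert \<Rightarrow> 'a"
  assumes "bounded_op A" "\<And>x. Im (cinner x (A x)) = 0" "\<And>x. 0 \<le> Re (cinner x (A x))"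
  shows "op_positive A"
  using assms unfolding op_positive_def by (auto simp: complex_is_Real_iff)

section \<open>Coefficients of sqrt(1-x)\<close>

definition cf :: "nat \<Rightarrow> real" where
  "cf n = (-1)^n * ((1/2::real) gchoose n)"

lemma gch_Suc: "(a::real) gchoose (Suc k) = (a gchoose k) * (a - of_nat k) / of_nat (Suc k)"
proof -
  have "fact (Suc k) * (a gchoose Suc k) = (\<Prod>i = 0..<Suc k. a - of_nat i)"
    by (rule gbinomial_mult_fact)
  also have "\<dots> = (\<Prod>i = 0..<k. a - of_nat i) * (a - of_nat k)" by simp
  also have "(\<Prod>i = 0..<k. a - of_nat i) = fact k * (a gchoose k)"
    by (rule gbinomial_mult_fact[symmetric])
  finally have "fact (Suc k) * (a gchoose Suc k) = fact k * (a gchoose k) * (a - of_nat k)" .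
  then have "of_nat (Suc k) * fact k * (a gchoose Suc k) = fact k * (a gchoose k) * (a - of_nat k)"
    by (simp add: fact_Suc)
  then have "of_nat (Suc k) * (a gchoose Suc k) = (a gchoose k) * (a - of_nat k)"
    by (simp add: mult.assoc mult.left_commute[of "fact k"])
  then show ?thesis by (simp add: field_simps del: of_nat_Suc)
qed

lemma cf_0[simp]: "cf 0 = 1" by (simp add: cf_def)

lemma cf_Suc: "cf (Suc n) = cf n * (real n - 1/2) / real (Suc n)"
  unfolding cf_def gch_Suc by (simp add: field_simps)

lemma cf_nonpos: "n \<ge> 1 \<Longrightarrow> cf n \<le> 0"
proof (induction n)
  case 0 then show ?case by simp
next
  case (Suc n)
  show ?case
  proof (cases "n = 0")
    case True then show ?thesis by (simp add: cf_Suc)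
  next
    case False
    then have "cf n \<le> 0" "real n - 1/2 \<ge> 0" using Suc by auto
    then show ?thesis unfolding cf_Suc
      by (intro divide_nonpos_nonneg mult_nonpos_nonneg) auto
  qed
qed

lemma cf_partial_nonneg: "0 \<le> (\<Sum>k\<le>m. cf k)"
proof -
  have "(\<Sum>k\<le>m. cf k) = (\<Sum>k\<le>m. ((1/2::real) gchoose k) * (- 1) ^ k)"
    by (simp add: cf_def mult.commute)
  also have "\<dots> = (- 1) ^ m * ((1/2::real) - 1 gchoose m)" by (rule gbinomial_sum_lower_neg)
  also have "0 \<le> (- 1) ^ m * ((1/2::real) - 1 gchoose m)"
  proof (induction m)
    case 0 then show ?case by simp
  next
    case (Suc m)
    have "(- 1) ^ Suc m * ((1/2::real) - 1 gchoose Suc m)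
       = ((- 1) ^ m * ((1/2::real) - 1 gchoose m)) * ((real m + 1/2) / real (Suc m))"
      unfolding gch_Suc by (simp add: field_simps)
    then show ?case using Suc by simp
  qed
  finally show ?thesis .
qed

lemma cf_abs_partial: "(\<Sum>k\<le>m. \<bar>cf k\<bar>) = 2 - (\<Sum>k\<le>m. cf k)"
proof (induction m)
  case 0 then show ?case by simp
next
  case (Suc m)
  have "\<bar>cf (Suc m)\<bar> = - cf (Suc m)" using cf_nonpos[of "Suc m"] by simp
  then show ?case using Suc by simp
qed

lemma cf_abs_summable: "summable (\<lambda>n. \<bar>cf n\<bar>)"
  by (rule bounded_imp_summable[where B=2]) (use cf_abs_partial cf_partial_nonneg in auto)

lemma cf_summable: "summable cf"
  using cf_abs_summable summable_rabs_cancel by blast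

lemma cf_suminf_nonneg: "0 \<le> suminf cf"
proof -
  have "(\<lambda>n. \<Sum>k<n. cf k) \<longlonglongrightarrow> suminf cf"
    using cf_summable summable_LIMSEQ by blast
  moreover have "0 \<le> (\<Sum>k<n. cf k)" for n
  proof (cases n)
    case 0 then show ?thesis by simp
  next
    case (Suc m) then show ?thesis using cf_partial_nonneg[of m] by (simp add: lessThan_Suc_atMost)
  qed
  ultimately show ?thesis by (intro LIMSEQ_le_const) auto
qed

lemma cf_conv: "(\<Sum>k\<le>n. cf k * cf (n - k)) = (if n = 0 then 1 else if n = 1 then -1 else 0)"
proof -
  have "(\<Sum>k\<le>n. cf k * cf (n - k)) = (\<Sum>k=0..n. (-1)^n * (((1/2::real) gchoose k) * ((1/2) gchoose (n - k))))"
    unfolding cf_def atMost_atLeast0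
  proof (intro sum.cong refl)
    fix k assume "k \<in> {0..n}"
    then have "(-1::real)^k * (-1)^(n-k) = (-1)^n" by (simp add: power_add[symmetric])
    then show "(- 1) ^ k * ((1/2::real) gchoose k) * ((- 1) ^ (n - k) * ((1/2::real) gchoose (n - k))) =
         (- 1) ^ n * (((1/2::real) gchoose k) * ((1/2::real) gchoose (n - k)))"
      by (metis (no_types, lifting) mult.assoc mult.left_commute)
  qed
  also have "\<dots> = (-1)^n * ((1/2 + 1/2::real) gchoose n)"
    by (simp add: sum_distrib_left[symmetric] gbinomial_Vandermonde)
  also have "(1/2 + 1/2::real) = of_nat 1" by simp
  also have "(of_nat 1 :: real) gchoose n = of_nat (1 choose n)" by (simp add: binomial_gbinomial)
  finally show ?thesis
    by (cases n; cases "n - 1") (auto simp: binomial_eq_0)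
qed

lemma suminf_infsum:
  fixes f :: "nat \<Rightarrow> 'a::banach"
  assumes "summable (\<lambda>n. norm (f n))"
  shows "suminf f = infsum f UNIV"
  using norm_summable_imp_has_sum[OF assms summable_sums[OF summable_norm_cancel[OF assms]]]
  by (simp add: infsumI)

lemma bij_diag: "bij_betw (\<lambda>(N::nat, k). (k, N - k)) (Sigma UNIV (\<lambda>N. {..N})) (UNIV \<times> UNIV)"
proof -
  have "inj_on (\<lambda>(N::nat, k). (k, N - k)) (Sigma UNIV (\<lambda>N. {..N}))"
    by (auto simp: inj_on_def)
  moreover have "(\<lambda>(N::nat, k). (k, N - k)) ` (Sigma UNIV (\<lambda>N. {..N})) = UNIV \<times> UNIV"
  proof -
    have "(n, m) \<in> (\<lambda>(N::nat, k). (k, N - k)) ` (Sigma UNIV (\<lambda>N. {..N}))" for n m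
      by (rule image_eqI[where x="(n + m, n)"]) auto
    then show ?thesis by auto
  qed
  ultimately show ?thesis unfolding bij_betw_def by blast
qed

lemma double_series:
  fixes a :: "nat \<Rightarrow> real" and v :: "nat \<Rightarrow> 'a::banach"
  assumes a: "summable (\<lambda>n. \<bar>a n\<bar>)" and v: "\<And>n. norm (v n) \<le> C"
  shows "(\<Sum>n. a n *\<^sub>R (\<Sum>m. a m *\<^sub>R v (n + m)))
       = infsum (\<lambda>N. (\<Sum>k\<le>N. a k * a (N - k)) *\<^sub>R v N) UNIV"
proof -
  define S where "S = (\<Sum>n. \<bar>a n\<bar>)"
  have C0: "0 \<le> C" using v[of 0] norm_ge_zero order.trans by blast
  have S0: "0 \<le> S" unfolding S_def using a by (simp add: suminf_nonneg)
  have aS: "((\<lambda>n. \<bar>a n\<bar>) has_sum S) UNIV"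
    unfolding S_def using norm_summable_imp_has_sum[of "\<lambda>n. \<bar>a n\<bar>"] a summable_sums by force
  define g where "g = (\<lambda>(n, m). (a n * a m) *\<^sub>R v (n + m))"
  have prod_sum: "(\<lambda>(n,m). \<bar>a n\<bar> * \<bar>a m\<bar> * C) summable_on (UNIV \<times> UNIV)"
  proof -
    have "(\<lambda>(n,m). \<bar>a n\<bar> * \<bar>a m\<bar>) summable_on Sigma UNIV (\<lambda>_. UNIV)"
    proof (rule summable_on_SigmaI[where g="\<lambda>n. \<bar>a n\<bar> * S"])
      show "((\<lambda>m. case (n, m) of (n, m) \<Rightarrow> \<bar>a n\<bar> * \<bar>a m\<bar>) has_sum \<bar>a n\<bar> * S) UNIV" for n
        using has_sum_cmult_right[OF aS, of "\<bar>a n\<bar>"] by simp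
      show "(\<lambda>n. \<bar>a n\<bar> * S) summable_on UNIV"
        using has_sum_cmult_left[OF aS, of S] summable_on_def by blast
    qed auto
    then show ?thesis using summable_on_cmult_left[of _ _ C] by (simp add: case_prod_unfold)
  qed
  have prod_abs: "(\<lambda>p. norm (case p of (n,m) \<Rightarrow> \<bar>a n\<bar> * \<bar>a m\<bar> * C)) summable_on (UNIV \<times> UNIV)"
    using prod_sum by (rule summable_on_cong[THEN iffD1, rotated]) (use C0 in \<open>auto simp: abs_mult\<close>)
  have gsum: "g summable_on (UNIV \<times> UNIV)"
  proof (rule abs_summable_summable, rule Infinite_Sum.abs_summable_on_comparison_test[OF prod_abs])
    fix x :: "nat \<times> nat" obtain n m where x: "x = (n, m)" by fastforce
    have "norm (g x) = \<bar>a n\<bar> * \<bar>a m\<bar> * norm (v (n + m))" unfolding g_def x by (simp add: abs_mult)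
    also have "\<dots> \<le> \<bar>a n\<bar> * \<bar>a m\<bar> * C" by (rule mult_left_mono[OF v]) simp
    finally show "norm (g x) \<le> norm (case x of (n, m) \<Rightarrow> \<bar>a n\<bar> * \<bar>a m\<bar> * C)"
      unfolding x using C0 by simp
  qed
  have inner: "(\<Sum>m. a m *\<^sub>R v (n + m)) = infsum (\<lambda>m. a m *\<^sub>R v (n + m)) UNIV" for n
  proof (rule suminf_infsum)
    show "summable (\<lambda>m. norm (a m *\<^sub>R v (n + m)))"
      by (rule summable_comparison_test'[where g="\<lambda>m. \<bar>a m\<bar> * C" and N=0])
        (use summable_mult2[OF a] v in \<open>auto intro: mult_left_mono\<close>)
  qed
  have innerb: "norm (\<Sum>m. a m *\<^sub>R v (n + m)) \<le> S * C" for n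
  proof -
    have sm: "summable (\<lambda>m. \<bar>a m\<bar> * C)" using summable_mult2[OF a] by simp
    have "norm (\<Sum>m. a m *\<^sub>R v (n + m)) \<le> (\<Sum>m. \<bar>a m\<bar> * C)"
      by (rule norm_suminf_le) (use sm v in \<open>auto intro: mult_left_mono\<close>)
    also have "\<dots> = S * C" unfolding S_def using suminf_mult2[OF a, of C] by simp
    finally show ?thesis .
  qed
  have outer: "(\<Sum>n. a n *\<^sub>R (\<Sum>m. a m *\<^sub>R v (n + m))) = infsum (\<lambda>n. a n *\<^sub>R (\<Sum>m. a m *\<^sub>R v (n + m))) UNIV"
  proof (rule suminf_infsum)
    show "summable (\<lambda>n. norm (a n *\<^sub>R (\<Sum>m. a m *\<^sub>R v (n + m))))"
      by (rule summable_comparison_test'[where g="\<lambda>n. \<bar>a n\<bar> * (S * C)" and N=0])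
        (use summable_mult2[OF a] innerb in \<open>auto intro: mult_left_mono\<close>)
  qed
  note outer
  also have "infsum (\<lambda>n. a n *\<^sub>R (\<Sum>m. a m *\<^sub>R v (n + m))) UNIV = infsum (\<lambda>n. infsum (\<lambda>m. g (n, m)) UNIV) UNIV"
    unfolding inner g_def by (simp add: infsum_scaleR_right[symmetric] scaleR_scaleR)
  also have "\<dots> = infsum g (UNIV \<times> UNIV)"
    by (rule infsum_Sigma_banach[OF gsum])
  also have "\<dots> = infsum (\<lambda>p. g ((\<lambda>(N, k). (k, N - k)) p)) (Sigma UNIV (\<lambda>N. {..N}))"
  proof (rule infsum_reindex_bij_betw[symmetric])
    show "bij_betw (\<lambda>(N::nat, k). (k, N - k)) (Sigma UNIV (\<lambda>N. {..N})) (UNIV \<times> UNIV)"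
      by (rule bij_diag)
  qed
  also have "\<dots> = infsum (\<lambda>N. infsum (\<lambda>k. g ((\<lambda>(N, k). (k, N - k)) (N, k))) {..N}) UNIV"
  proof (rule infsum_Sigma_banach[symmetric])
    show "(\<lambda>p. g ((\<lambda>(N, k). (k, N - k)) p)) summable_on Sigma UNIV (\<lambda>N. {..N})"
      using summable_on_reindex_bij_betw[OF bij_diag, of g] gsum by blast
  qed
  also have "\<dots> = infsum (\<lambda>N. (\<Sum>k\<le>N. a k * a (N - k)) *\<^sub>R v N) UNIV"
    by (intro infsum_cong) (simp add: g_def scaleR_sum_left)
  finally show ?thesis .
qed

section \<open>Square roots of positive operators\<close>

lemma bounded_op_funpow: "bounded_op A \<Longrightarrow> bounded_op (A ^^ n)"
  by (induction n) (auto intro: bounded_op_comp bounded_op_id)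

lemma bounded_op_suminf:
  assumes "bounded_op A" "summable f"
  shows "A (suminf f) = (\<Sum>n. A (f n))"
  by (rule bounded_linear.suminf[OF bounded_op_linear[OF assms(1)] assms(2)])

lemma bounded_op_scaleR: "bounded_op A \<Longrightarrow> A (r *\<^sub>R x) = r *\<^sub>R A x"
  by (metis bounded_opD(2) scaleC_of_real)

lemma scaleC_bounded_linear: "bounded_linear (scaleC c :: 'a::chilbert \<Rightarrow> 'a)"
proof (rule bounded_linear_intro[where K="cmod c"])
  show "scaleC c (x + y) = scaleC c x + scaleC c y" for x y by (rule scaleC_add_right)
  show "scaleC c (r *\<^sub>R x) = r *\<^sub>R scaleC c x" for r x
    by (metis scaleC_of_real scaleC_scaleC mult.commute)
  show "norm (scaleC c x) \<le> norm x * cmod c" for x by (simp add: norm_scaleC mult.commute)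
qed

lemma cinner_bounded_linear: "bounded_linear (cinner (y::'a::chilbert))"
proof (rule bounded_linear_intro[where K="norm y"])
  show "cinner y (x + z) = cinner y x + cinner y z" for x z by (rule cinner_add_right)
  show "cinner y (r *\<^sub>R x) = r *\<^sub>R cinner y x" for r x
    by (metis cinner_scaleC_right scaleC_of_real scaleR_conv_of_real)
  show "norm (cinner y x) \<le> norm x * norm y" for x using cinner_cs[of y x] by (simp add: mult.commute)
qed

lemma scaleC_scaleR_commute: "scaleC c (r *\<^sub>R (x::'a::chilbert)) = r *\<^sub>R scaleC c x"
  by (metis scaleC_of_real scaleC_scaleC mult.commute)

lemma cinner_scaleR_left: "cinner (r *\<^sub>R (y::'a::chilbert)) x = complex_of_real r * cinner y x"
  by (metis cinner_scaleC_left scaleC_of_real complex_cnj_complex_of_real)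

lemma cinner_scaleR_right: "cinner (y::'a::chilbert) (r *\<^sub>R x) = complex_of_real r * cinner y x"
  by (metis cinner_scaleC_right scaleC_of_real)

locale sqrt_ctx =
  fixes P :: "'a::chilbert \<Rightarrow> 'a"
  assumes Ppos: "op_positive P"
begin

definition s :: real where "s = onorm P + 1"
definition Q :: "'a \<Rightarrow> 'a" where "Q = (\<lambda>x. x - (1 / s) *\<^sub>R P x)"
definition R :: "'a \<Rightarrow> 'a" where "R = (\<lambda>x. \<Sum>n. cf n *\<^sub>R (Q ^^ n) x)"

lemma Pb: "bounded_op P" using pos_bounded[OF Ppos] .

lemma s_pos: "0 < s" unfolding s_def using onorm_nonneg'[OF Pb] by simp

lemma Q_eq: "Q = id - op_scale (complex_of_real (1 / s)) P"
  unfolding Q_def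
proof (rule ext)
  fix x show "x - (1 / s) *\<^sub>R P x = (id - op_scale (complex_of_real (1 / s)) P) x"
    using scaleC_of_real[of "1/s" "P x"] by simp
qed

lemma Qb: "bounded_op Q"
  unfolding Q_eq by (intro bounded_op_diff_op bounded_op_id bounded_op_scale Pb)

lemma P_sa: "cinner (P x) y = cinner x (P y)"
  using adj_prop[OF Pb, of x y] pos_selfadj[OF Ppos] by simp

lemma Q_sa: "cinner (Q x) y = cinner x (Q y)"
  unfolding Q_def by (simp add: cinner_diff_left cinner_diff_right cinner_scaleR_right P_sa
      cinner_scaleR_left)

lemma Qpos: "op_positive Q"
proof (rule positiveI[OF Qb])
  fix x
  have e: "cinner x (Q x) = cinner x x - complex_of_real (1 / s) * cinner x (P x)"
    unfolding Q_def by (simp add: cinner_diff_right cinner_scaleR_right)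
  show "Im (cinner x (Q x)) = 0" unfolding e using pos_Im[OF Ppos] by simp
  have "Re (cinner x (P x)) \<le> onorm P * (norm x)\<^sup>2" by (rule pos_le_onorm[OF Pb])
  also have "\<dots> \<le> s * (norm x)\<^sup>2" unfolding s_def by (intro mult_right_mono) auto
  finally have "(1 / s) * Re (cinner x (P x)) \<le> (norm x)\<^sup>2"
    using s_pos by (simp add: field_simps)
  then show "0 \<le> Re (cinner x (Q x))" unfolding e by simp
qed

lemma Q_le: "Re (cinner x (Q x)) \<le> (norm x)\<^sup>2"
proof -
  have e: "cinner x (Q x) = cinner x x - complex_of_real (1 / s) * cinner x (P x)"
    unfolding Q_def by (simp add: cinner_diff_right cinner_scaleR_right)
  show ?thesis unfolding e using pos_Re[OF Ppos, of x] s_pos by simp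
qed

lemma Q_norm: "norm (Q x) \<le> norm x"
proof -
  have "(cmod (cinner (Q x) (Q x)))\<^sup>2 \<le> Re (cinner (Q x) (Q (Q x))) * Re (cinner x (Q x))"
    by (rule pos_form(1)[OF Qpos])
  also have "\<dots> \<le> (norm (Q x))\<^sup>2 * (norm x)\<^sup>2"
    by (intro mult_mono Q_le) (use pos_Re[OF Qpos] in auto)
  moreover have "cmod (cinner (Q x) (Q x)) = (norm (Q x))\<^sup>2" by (simp add: cinner_self_norm norm_power)
  ultimately have "((norm (Q x))\<^sup>2)\<^sup>2 \<le> (norm (Q x))\<^sup>2 * (norm x)\<^sup>2"
    by simp
  then have "(norm (Q x))\<^sup>2 \<le> (norm x)\<^sup>2"
    by (cases "Q x = 0") (auto simp: power2_eq_square)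
  then show ?thesis by (simp add: power2_le_iff_abs_le)
qed

lemma Qn_b: "bounded_op (Q ^^ n)" by (rule bounded_op_funpow[OF Qb])

lemma Qn_norm: "norm ((Q ^^ n) x) \<le> norm x"
  by (induction n) (auto intro: order.trans[OF Q_norm])

lemma Qn_sa: "cinner ((Q ^^ n) x) y = cinner x ((Q ^^ n) y)"
proof (induction n arbitrary: x y)
  case 0 then show ?case by simp
next
  case (Suc n)
  have "cinner ((Q ^^ Suc n) x) y = cinner (Q ((Q ^^ n) x)) y" by simp
  also have "\<dots> = cinner ((Q ^^ n) x) (Q y)" by (rule Q_sa)
  also have "\<dots> = cinner x ((Q ^^ n) (Q y))" by (rule Suc)
  also have "(Q ^^ n) (Q y) = (Q ^^ Suc n) y" by (simp add: funpow_Suc_right del: funpow.simps)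
  finally show ?case .
qed

lemma Qn_add: "(Q ^^ n) ((Q ^^ m) x) = (Q ^^ (n + m)) x"
  by (simp add: funpow_add)

lemma R_summable: "summable (\<lambda>n. norm (cf n *\<^sub>R (Q ^^ n) x))"
  by (rule summable_comparison_test'[where g="\<lambda>n. \<bar>cf n\<bar> * norm x" and N=0])
    (use summable_mult2[OF cf_abs_summable] Qn_norm in \<open>auto intro: mult_left_mono\<close>)

lemma R_summable': "summable (\<lambda>n. cf n *\<^sub>R (Q ^^ n) x)"
  using summable_norm_cancel[OF R_summable] .

lemma R_norm: "norm (R x) \<le> (\<Sum>n. \<bar>cf n\<bar>) * norm x"
proof -
  have "norm (R x) \<le> (\<Sum>n. \<bar>cf n\<bar> * norm x)" unfolding R_def
    by (rule norm_suminf_le) (use summable_mult2[OF cf_abs_summable] Qn_norm in \<open>auto intro: mult_left_mono\<close>)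
  also have "\<dots> = (\<Sum>n. \<bar>cf n\<bar>) * norm x" using suminf_mult2[OF cf_abs_summable] by simp
  finally show ?thesis .
qed

lemma R_comm:
  assumes B: "bounded_op B" and BP: "\<And>x. B (P x) = P (B x)"
  shows "B (R x) = R (B x)"
proof -
  have BQ: "B (Q x) = Q (B x)" for x
    unfolding Q_def using BP bounded_op_diff[OF B] bounded_op_scaleR[OF B] by simp
  have BQn: "B ((Q ^^ n) x) = (Q ^^ n) (B x)" for n x
    by (induction n) (simp_all add: BQ)
  have "B (R x) = (\<Sum>n. B (cf n *\<^sub>R (Q ^^ n) x))"
    unfolding R_def by (rule bounded_op_suminf[OF B R_summable'])
  also have "\<dots> = R (B x)" unfolding R_def by (simp add: bounded_op_scaleR[OF B] BQn)
  finally show ?thesis .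
qed

lemma Rb: "bounded_op R"
proof (rule bounded_opI[where K="\<Sum>n. \<bar>cf n\<bar>"])
  show "R (x + y) = R x + R y" for x y
    unfolding R_def using bounded_opD(1)[OF Qn_b]
    by (simp add: scaleR_add_right suminf_add[OF R_summable' R_summable', symmetric])
  show "R (scaleC c x) = scaleC c (R x)" for c x
  proof -
    have "scaleC c (R x) = (\<Sum>n. scaleC c (cf n *\<^sub>R (Q ^^ n) x))"
      unfolding R_def by (rule bounded_linear.suminf[OF scaleC_bounded_linear R_summable'])
    also have "\<dots> = R (scaleC c x)" unfolding R_def
      using bounded_opD(2)[OF Qn_b] by (simp add: scaleC_scaleR_commute)
    finally show ?thesis by simp
  qed
  show "norm (R x) \<le> (\<Sum>n. \<bar>cf n\<bar>) * norm x" for x by (rule R_norm)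
qed

lemma R_sq: "R (R x) = x - Q x"
proof -
  have "R (R x) = (\<Sum>n. cf n *\<^sub>R (Q ^^ n) (\<Sum>m. cf m *\<^sub>R (Q ^^ m) x))"
    by (simp add: R_def)
  also have "\<dots> = (\<Sum>n. cf n *\<^sub>R (\<Sum>m. cf m *\<^sub>R (Q ^^ (n + m)) x))"
    by (simp add: bounded_op_suminf[OF Qn_b R_summable'] bounded_op_scaleR[OF Qn_b] Qn_add)
  also have "\<dots> = infsum (\<lambda>N. (\<Sum>k\<le>N. cf k * cf (N - k)) *\<^sub>R (Q ^^ N) x) UNIV"
    by (rule double_series[OF cf_abs_summable Qn_norm])
  also have "\<dots> = infsum (\<lambda>N. (if N = 0 then 1 else if N = 1 then -1 else 0) *\<^sub>R (Q ^^ N) x) {0, 1}"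
    by (rule infsum_cong_neutral) (auto simp: cf_conv)
  also have "\<dots> = x - Q x" by simp
  finally show ?thesis .
qed

lemma R_pos: "op_positive R"
proof (rule positiveI[OF Rb])
  fix x
  define q where "q n = cinner x ((Q ^^ n) x)" for n
  have qIm: "Im (q n) = 0" for n
  proof -
    have "q n = cinner ((Q ^^ n) x) x" unfolding q_def by (simp add: Qn_sa)
    also have "\<dots> = cnj (q n)" unfolding q_def by (rule cinner_conj)
    finally show ?thesis by (metis Reals_cnj_iff complex_is_Real_iff)
  qed
  have qRe: "Re (q n) \<le> (norm x)\<^sup>2" for n
  proof -
    have "Re (q n) \<le> cmod (q n)" by (rule complex_Re_le_cmod)
    also have "\<dots> \<le> norm x * norm ((Q ^^ n) x)" unfolding q_def by (rule cinner_cs)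
    also have "\<dots> \<le> norm x * norm x" by (rule mult_left_mono[OF Qn_norm]) simp
    finally show ?thesis by (simp add: power2_eq_square)
  qed
  have q0: "q 0 = complex_of_real ((norm x)\<^sup>2)" unfolding q_def by (simp add: cinner_self_norm)
  have sm: "summable (\<lambda>n. complex_of_real (cf n) * q n)"
  proof -
    have "summable (\<lambda>n. cinner x (cf n *\<^sub>R (Q ^^ n) x))"
      by (rule bounded_linear.summable[OF cinner_bounded_linear R_summable'])
    then show ?thesis by (simp add: q_def cinner_scaleR_right)
  qed
  have e: "cinner x (R x) = (\<Sum>n. complex_of_real (cf n) * q n)"
    unfolding R_def
    by (simp add: bounded_linear.suminf[OF cinner_bounded_linear R_summable'] q_def cinner_scaleR_right)
  have "Im (cinner x (R x)) = (\<Sum>n. Im (complex_of_real (cf n) * q n))"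
    unfolding e by (rule Im_suminf[OF sm])
  also have "\<dots> = 0" using qIm by simp
  finally show "Im (cinner x (R x)) = 0" .
  have smr: "summable (\<lambda>n. cf n * Re (q n))"
    using summable_Re[OF sm] qIm by simp
  have "Re (cinner x (R x)) = (\<Sum>n. cf n * Re (q n))"
    unfolding e using Re_suminf[OF sm] qIm by simp
  also have "(\<Sum>n. cf n * (norm x)\<^sup>2) \<le> (\<Sum>n. cf n * Re (q n))"
  proof (rule suminf_le)
    show "cf n * (norm x)\<^sup>2 \<le> cf n * Re (q n)" for n
    proof (cases "n = 0")
      case True then show ?thesis using q0 by simp
    next
      case False
      then have "cf n \<le> 0" using cf_nonpos by simp
      then show ?thesis using qRe[of n] by (simp add: mult_left_mono_neg)
    qed
    show "summable (\<lambda>n. cf n * (norm x)\<^sup>2)" using summable_mult2[OF cf_summable] .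
  qed (rule smr)
  finally have "(\<Sum>n. cf n * (norm x)\<^sup>2) \<le> Re (cinner x (R x))" .
  moreover have "(\<Sum>n. cf n * (norm x)\<^sup>2) = suminf cf * (norm x)\<^sup>2"
    using suminf_mult2[OF cf_summable] by simp
  moreover have "0 \<le> suminf cf * (norm x)\<^sup>2" using cf_suminf_nonneg by simp
  ultimately show "0 \<le> Re (cinner x (R x))" by linarith
qed

definition S :: "'a \<Rightarrow> 'a" where "S = (\<lambda>x. sqrt s *\<^sub>R R x)"

lemma S_eq: "S = op_scale (complex_of_real (sqrt s)) R"
  unfolding S_def by (rule ext) (simp add: scaleC_of_real)

lemma S_pos: "op_positive S"
proof (rule positiveI)
  show "bounded_op S" unfolding S_eq by (rule bounded_op_scale[OF Rb])
  fix x
  show "Im (cinner x (S x)) = 0" unfolding S_def using pos_Im[OF R_pos] by (simp add: cinner_scaleR_right)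
  show "0 \<le> Re (cinner x (S x))" unfolding S_def using pos_Re[OF R_pos] s_pos by (simp add: cinner_scaleR_right)
qed

lemma S_sq: "S \<circ> S = P"
proof (rule ext)
  fix x
  have "(S \<circ> S) x = (sqrt s * sqrt s) *\<^sub>R R (R x)"
    unfolding S_def by (simp add: bounded_op_scaleR[OF Rb])
  also have "\<dots> = s *\<^sub>R (x - Q x)" using s_pos by (simp add: R_sq)
  also have "\<dots> = P x" unfolding Q_def using s_pos by simp
  finally show "(S \<circ> S) x = P x" .
qed

lemma S_comm:
  assumes B: "bounded_op B" and BP: "B \<circ> P = P \<circ> B"
  shows "B \<circ> S = S \<circ> B"
proof (rule ext)
  fix x
  have BP': "B (P y) = P (B y)" for y using BP by (metis comp_apply)
  show "(B \<circ> S) x = (S \<circ> B) x"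
    unfolding S_def by (simp add: bounded_op_scaleR[OF B] R_comm[OF B BP'])
qed

end

lemma sqrt_exists:
  fixes P :: "'a::chilbert \<Rightarrow> 'a"
  assumes "op_positive P"
  shows "\<exists>S. op_positive S \<and> S \<circ> S = P \<and> (\<forall>B. bounded_op B \<and> B \<circ> P = P \<circ> B \<longrightarrow> B \<circ> S = S \<circ> B)"
proof -
  interpret sqrt_ctx P by (rule sqrt_ctx.intro[OF assms])
  show ?thesis using S_pos S_sq S_comm by blast
qed

lemma pos_sa_apply:
  fixes A :: "'a::chilbert \<Rightarrow> 'a"
  assumes "op_positive A" shows "cinner (A x) y = cinner x (A y)"
  using adj_prop[OF pos_bounded[OF assms], of x y] pos_selfadj[OF assms] by simp

lemma sqrt_unique:
  fixes P :: "'a::chilbert \<Rightarrow> 'a"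
  assumes Y: "op_positive Y" "Y \<circ> Y = P"
    and S: "op_positive S" "S \<circ> S = P" "\<forall>B. bounded_op B \<and> B \<circ> P = P \<circ> B \<longrightarrow> B \<circ> S = S \<circ> B"
  shows "Y = S"
proof (rule ext)
  fix x
  have Yb: "bounded_op Y" using pos_bounded[OF Y(1)] .
  have Sb: "bounded_op S" using pos_bounded[OF S(1)] .
  have "Y \<circ> P = P \<circ> Y" using Y(2) by (auto simp: comp_assoc)
  then have YS: "Y \<circ> S = S \<circ> Y" using S(3) Yb by blast
  have YS': "Y (S z) = S (Y z)" for z using YS by (metis comp_apply)
  have YY: "Y (Y z) = P z" for z using Y(2) by (metis comp_apply)
  have SS: "S (S z) = P z" for z using S(2) by (metis comp_apply)
  define y where "y = Y x - S x"
  have "Y y + S y = 0"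
    unfolding y_def bounded_op_diff[OF Yb] bounded_op_diff[OF Sb] using YY SS YS' by simp
  then have "cinner y (Y y) + cinner y (S y) = 0" by (metis cinner_add_right cinner_zero_right)
  then have "Re (cinner y (Y y)) + Re (cinner y (S y)) = 0" by (metis plus_complex.sel(1) zero_complex.sel(1))
  then have "Re (cinner y (Y y)) = 0" "Re (cinner y (S y)) = 0"
    using pos_Re[OF Y(1), of y] pos_Re[OF S(1), of y] by linarith+
  then have "Y y = 0" "S y = 0" using pos_zero Y(1) S(1) by blast+
  then have "cinner x (Y y - S y) = 0" by simp
  then have "cinner (Y x - S x) y = 0"
    by (simp add: cinner_diff_left cinner_diff_right pos_sa_apply[OF Y(1)] pos_sa_apply[OF S(1)])
  then have "cinner y y = 0" unfolding y_def .
  then show "Y x = S x" unfolding y_def by (simp add: cinner_self_eq0)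
qed

lemma adj_comp_self_pos:
  fixes X :: "'a::chilbert \<Rightarrow> 'a"
  assumes X: "bounded_op X"
  shows "op_positive (op_adjoint X \<circ> X)"
proof (rule positiveI)
  show "bounded_op (op_adjoint X \<circ> X)" by (intro bounded_op_comp adj_bounded X)
  fix x
  have e: "cinner x ((op_adjoint X \<circ> X) x) = cinner (X x) (X x)" by (simp add: adj_prop[OF X])
  show "Im (cinner x ((op_adjoint X \<circ> X) x)) = 0" unfolding e by simp
  show "0 \<le> Re (cinner x ((op_adjoint X \<circ> X) x))" unfolding e by simp
qed

lemma op_abs_prop:
  fixes X :: "'a::chilbert \<Rightarrow> 'a"
  assumes X: "bounded_op X"
  shows "op_positive (op_abs X) \<and> op_abs X \<circ> op_abs X = op_adjoint X \<circ> X"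
proof -
  obtain S where S: "op_positive S" "S \<circ> S = op_adjoint X \<circ> X"
    "\<forall>B. bounded_op B \<and> B \<circ> (op_adjoint X \<circ> X) = (op_adjoint X \<circ> X) \<circ> B \<longrightarrow> B \<circ> S = S \<circ> B"
    using sqrt_exists[OF adj_comp_self_pos[OF X]] by blast
  have "op_abs X = S" unfolding op_abs_def
  proof (rule the_equality)
    show "op_positive S \<and> S \<circ> S = op_adjoint X \<circ> X" using S by blast
    show "Y = S" if "op_positive Y \<and> Y \<circ> Y = op_adjoint X \<circ> X" for Y
      using sqrt_unique[of Y _ S] that S by blast
  qed
  then show ?thesis using S by simp
qed

lemma op_abs_pos:
  fixes T :: "'a::chilbert \<Rightarrow> 'a"
  assumes T: "op_positive T"
  shows "op_abs T = T"
proof -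
  have Tb: "bounded_op T" by (rule pos_bounded[OF T])
  have TT: "T \<circ> T = op_adjoint T \<circ> T" by (simp add: pos_selfadj[OF T])
  from sqrt_exists[OF adj_comp_self_pos[OF Tb]] obtain S where S: "op_positive S" "S \<circ> S = op_adjoint T \<circ> T"
    "\<forall>B. bounded_op B \<and> B \<circ> (op_adjoint T \<circ> T) = (op_adjoint T \<circ> T) \<circ> B \<longrightarrow> B \<circ> S = S \<circ> B"
    by blast
  have A: "op_positive (op_abs T)" "op_abs T \<circ> op_abs T = op_adjoint T \<circ> T"
    using op_abs_prop[OF Tb] by auto
  have "op_abs T = S" by (rule sqrt_unique[OF A S])
  moreover have "T = S" by (rule sqrt_unique[OF T TT S])
  ultimately show ?thesis by simp
qed

lemma funpow2: "f ^^ 2 = f \<circ> f"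
  by (simp add: numeral_2_eq_2)

lemma funpow4: "f ^^ 4 = (f \<circ> f) \<circ> (f \<circ> f)"
  by (simp add: numeral_Bit0 funpow_add funpow2 comp_assoc)

lemma tr_pnorm2:
  fixes X :: "'a::chilbert \<Rightarrow> 'a"
  assumes "bounded_op X" "0 \<le> Re (\<tau> (op_adjoint X \<circ> X))"
  shows "tr_pnorm \<tau> 2 X = sqrt (Re (\<tau> (op_adjoint X \<circ> X)))"
  unfolding tr_pnorm_def funpow2 using op_abs_prop[OF assms(1)]
  by (simp add: powr_half_sqrt[symmetric] assms(2))

lemma tr_pnorm4:
  fixes X :: "'a::chilbert \<Rightarrow> 'a"
  assumes "bounded_op X"
  shows "tr_pnorm \<tau> 4 X = (Re (\<tau> ((op_adjoint X \<circ> X) \<circ> (op_adjoint X \<circ> X)))) powr (1/4)"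
  unfolding tr_pnorm_def funpow4 using op_abs_prop[OF assms] by simp

locale trctx =
  fixes M :: "('a::chilbert \<Rightarrow> 'a) set" and \<tau> :: "('a \<Rightarrow> 'a) \<Rightarrow> complex"
  assumes vN: "von_neumann_algebra M" and tr: "finite_trace M \<tau>"
begin

lemma Mb: "X \<in> M \<Longrightarrow> bounded_op X" using vN unfolding von_neumann_algebra_def by blast
lemma M_id: "id \<in> M" using vN unfolding von_neumann_algebra_def by blast
lemma M_add: "X \<in> M \<Longrightarrow> Y \<in> M \<Longrightarrow> X + Y \<in> M" using vN unfolding von_neumann_algebra_def by blast
lemma M_comp: "X \<in> M \<Longrightarrow> Y \<in> M \<Longrightarrow> X \<circ> Y \<in> M" using vN unfolding von_neumann_algebra_def by blast
lemma M_scale: "X \<in> M \<Longrightarrow> op_scale c X \<in> M" using vN unfolding von_neumann_algebra_def by blast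
lemma M_adj: "X \<in> M \<Longrightarrow> op_adjoint X \<in> M" using vN unfolding von_neumann_algebra_def by blast
lemma M_diff: "X \<in> M \<Longrightarrow> Y \<in> M \<Longrightarrow> X - Y \<in> M"
  unfolding minus_op_scale by (intro M_add M_scale)
lemma M_bicomm: "commutant (commutant M) = M" using vN unfolding von_neumann_algebra_def by blast

lemma tau_add: "X \<in> M \<Longrightarrow> Y \<in> M \<Longrightarrow> \<tau> (X + Y) = \<tau> X + \<tau> Y"
  using tr unfolding finite_trace_def by blast
lemma tau_scale: "X \<in> M \<Longrightarrow> \<tau> (op_scale c X) = c * \<tau> X"
  using tr unfolding finite_trace_def by blast
lemma tau_comm: "X \<in> M \<Longrightarrow> Y \<in> M \<Longrightarrow> \<tau> (X \<circ> Y) = \<tau> (Y \<circ> X)"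
  using tr unfolding finite_trace_def by blast
lemma tau_pos: "X \<in> M \<Longrightarrow> op_positive X \<Longrightarrow> Im (\<tau> X) = 0 \<and> 0 \<le> Re (\<tau> X)"
  using tr unfolding finite_trace_def by (auto simp: complex_is_Real_iff)
lemma tau_diff: "X \<in> M \<Longrightarrow> Y \<in> M \<Longrightarrow> \<tau> (X - Y) = \<tau> X - \<tau> Y"
  unfolding minus_op_scale by (simp add: tau_add tau_scale M_scale)

lemma sandwich_pos:
  assumes K: "op_positive K" and X: "bounded_op X"
  shows "op_positive (op_adjoint X \<circ> K \<circ> X)"
proof (rule positiveI)
  show "bounded_op (op_adjoint X \<circ> K \<circ> X)"
    by (intro bounded_op_comp adj_bounded X pos_bounded[OF K])
  fix x
  have e: "cinner x ((op_adjoint X \<circ> K \<circ> X) x) = cinner (X x) (K (X x))"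
    by (simp add: adj_prop[OF X])
  show "Im (cinner x ((op_adjoint X \<circ> K \<circ> X) x)) = 0" unfolding e by (rule pos_Im[OF K])
  show "0 \<le> Re (cinner x ((op_adjoint X \<circ> K \<circ> X) x))" unfolding e by (rule pos_Re[OF K])
qed

lemma form_pos:
  assumes K: "K \<in> M" "op_positive K" and X: "X \<in> M"
  shows "Im (\<tau> (K \<circ> X \<circ> op_adjoint X)) = 0 \<and> 0 \<le> Re (\<tau> (K \<circ> X \<circ> op_adjoint X))"
proof -
  have "\<tau> (K \<circ> X \<circ> op_adjoint X) = \<tau> (op_adjoint X \<circ> K \<circ> X)"
    using tau_comm[OF M_comp[OF K(1) X] M_adj[OF X]] by (simp add: comp_assoc)
  moreover have "op_adjoint X \<circ> K \<circ> X \<in> M" by (intro M_comp M_adj X K(1))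
  ultimately show ?thesis using tau_pos sandwich_pos[OF K(2) Mb[OF X]] by simp
qed

lemma form_expand:
  assumes K: "K \<in> M" and X: "X \<in> M" and Y: "Y \<in> M"
  shows "\<tau> (K \<circ> (X + op_scale c Y) \<circ> op_adjoint (X + op_scale c Y))
    = \<tau> (K \<circ> X \<circ> op_adjoint X) + (c * \<tau> (K \<circ> Y \<circ> op_adjoint X) + cnj c * \<tau> (K \<circ> X \<circ> op_adjoint Y))
      + cnj c * c * \<tau> (K \<circ> Y \<circ> op_adjoint Y)"
proof -
  have Kb: "bounded_op K" and Xb: "bounded_op X" and Yb: "bounded_op Y" using Mb K X Y by auto
  have XA: "bounded_op (op_adjoint X)" and YA: "bounded_op (op_adjoint Y)" using adj_bounded Xb Yb by auto
  have adj: "op_adjoint (X + op_scale c Y) = op_adjoint X + op_scale (cnj c) (op_adjoint Y)"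
    using adj_add[OF Xb bounded_op_scale[OF Yb]] adj_scale[OF Yb] by simp
  have e: "K \<circ> (X + op_scale c Y) \<circ> op_adjoint (X + op_scale c Y)
     = (K \<circ> X \<circ> op_adjoint X) + (op_scale c (K \<circ> Y \<circ> op_adjoint X) + op_scale (cnj c) (K \<circ> X \<circ> op_adjoint Y))
       + op_scale (cnj c * c) (K \<circ> Y \<circ> op_adjoint Y)"
    unfolding adj
  proof (rule ext)
    fix x
    define u where "u = op_adjoint X x"
    define v where "v = op_adjoint Y x"
    have l: "(K \<circ> (X + op_scale c Y) \<circ> (op_adjoint X + op_scale (cnj c) (op_adjoint Y))) x
      = K (X u) + (scaleC (cnj c) (K (X v)) + (scaleC c (K (Y u)) + scaleC (c * cnj c) (K (Y v))))"
      unfolding u_def v_def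
      by (simp only: comp_apply plus_fun_apply op_scale_apply bounded_opD[OF Kb] bounded_opD[OF Xb]
          bounded_opD[OF Yb] scaleC_add_right scaleC_scaleC add.assoc)
    have r: "((K \<circ> X \<circ> op_adjoint X) + (op_scale c (K \<circ> Y \<circ> op_adjoint X) + op_scale (cnj c) (K \<circ> X \<circ> op_adjoint Y))
       + op_scale (cnj c * c) (K \<circ> Y \<circ> op_adjoint Y)) x
      = K (X u) + (scaleC c (K (Y u)) + scaleC (cnj c) (K (X v))) + scaleC (cnj c * c) (K (Y v))"
      unfolding u_def v_def by (simp only: comp_apply plus_fun_apply op_scale_apply)
    show "(K \<circ> (X + op_scale c Y) \<circ> (op_adjoint X + op_scale (cnj c) (op_adjoint Y))) x =
      ((K \<circ> X \<circ> op_adjoint X) + (op_scale c (K \<circ> Y \<circ> op_adjoint X) + op_scale (cnj c) (K \<circ> X \<circ> op_adjoint Y))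
       + op_scale (cnj c * c) (K \<circ> Y \<circ> op_adjoint Y)) x"
      unfolding l r by (simp add: add_ac mult.commute)
  qed
  have m: "K \<circ> X \<circ> op_adjoint X \<in> M" "K \<circ> Y \<circ> op_adjoint X \<in> M" "K \<circ> X \<circ> op_adjoint Y \<in> M"
    "K \<circ> Y \<circ> op_adjoint Y \<in> M" by (intro M_comp M_adj K X Y)+
  show ?thesis unfolding e
    by (simp add: tau_add tau_scale M_add M_scale m)
qed

lemma cplx_quad:
  fixes a b d e :: complex
  assumes "Im a = 0" "Im e = 0"
  shows "Im (a + (c * b + cnj c * d) + cnj c * c * e) = Im (c * b + cnj c * d)"
    and "Re (a + (c * b + cnj c * d) + cnj c * c * e) = Re a + Re (c * b + cnj c * d) + (cmod c)\<^sup>2 * Re e"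
proof -
  have cc: "cnj c * c * e = complex_of_real ((cmod c)\<^sup>2 * Re e)"
    using assms(2) by (simp add: cnj_mult_cmod complex_eq_iff)
  show "Im (a + (c * b + cnj c * d) + cnj c * c * e) = Im (c * b + cnj c * d)"
    unfolding cc using assms(1) by simp
  show "Re (a + (c * b + cnj c * d) + cnj c * c * e) = Re a + Re (c * b + cnj c * d) + (cmod c)\<^sup>2 * Re e"
    unfolding cc by simp
qed

lemma form_cs:
  assumes K: "K \<in> M" "op_positive K" and X: "X \<in> M" and Y: "Y \<in> M"
  shows "(cmod (\<tau> (K \<circ> Y \<circ> op_adjoint X)))\<^sup>2 \<le> Re (\<tau> (K \<circ> X \<circ> op_adjoint X)) * Re (\<tau> (K \<circ> Y \<circ> op_adjoint Y))"
proof -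
  define a where "a = \<tau> (K \<circ> X \<circ> op_adjoint X)"
  define b where "b = \<tau> (K \<circ> Y \<circ> op_adjoint X)"
  define d where "d = \<tau> (K \<circ> X \<circ> op_adjoint Y)"
  define e where "e = \<tau> (K \<circ> Y \<circ> op_adjoint Y)"
  have pa: "Im a = 0" "0 \<le> Re a" using form_pos[OF K X] unfolding a_def by auto
  have pe: "Im e = 0" "0 \<le> Re e" using form_pos[OF K Y] unfolding e_def by auto
  have p: "Im (a + (c * b + cnj c * d) + cnj c * c * e) = 0 \<and> 0 \<le> Re (a + (c * b + cnj c * d) + cnj c * c * e)" for c
  proof -
    have Z: "X + op_scale c Y \<in> M" by (intro M_add M_scale X Y)
    show ?thesis using form_pos[OF K Z] unfolding form_expand[OF K(1) X Y, of c] a_def b_def d_def e_def .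
  qed
  have "(cmod b)\<^sup>2 \<le> Re a * Re e"
  proof (rule cs_scalar(1))
    fix c
    show "Im (c * b + cnj c * d) = 0" using conjunct1[OF p[of c]] cplx_quad(1)[OF pa(1) pe(1), of c b d] by argo
    show "0 \<le> Re a + Re (c * b + cnj c * d) + (cmod c)\<^sup>2 * Re e"
      using conjunct2[OF p[of c]] cplx_quad(2)[OF pa(1) pe(1), of c b d] by argo
  next
    show "0 \<le> Re a" by (rule pa(2))
  next
    show "0 \<le> Re e" by (rule pe(2))
  qed
  then show ?thesis unfolding a_def b_def e_def .
qed

end

lemma Re_ofreal_mult: "Re (complex_of_real r * w) = r * Re w"
  by simp

lemma id_pos: "op_positive (id :: 'a::chilbert \<Rightarrow> 'a)"
  by (rule positiveI[OF bounded_op_id]) auto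

locale thctx = trctx +
  fixes T
  assumes TM: "T \<in> M" and Tpos: "op_positive T" and T1: "\<tau> T = 1"
begin

lemma Tb: "bounded_op T" by (rule pos_bounded[OF Tpos])

lemma sqrtT: "\<exists>R. R \<in> M \<and> op_positive R \<and> R \<circ> R = T"
proof -
  from sqrt_exists[OF Tpos] obtain S where S: "op_positive S" "S \<circ> S = T"
    "\<forall>B. bounded_op B \<and> B \<circ> T = T \<circ> B \<longrightarrow> B \<circ> S = S \<circ> B" by blast
  have "S \<in> commutant (commutant M)"
    unfolding commutant_def
  proof (intro CollectI conjI ballI)
    show "bounded_op S" by (rule pos_bounded[OF S(1)])
    fix A assume "A \<in> {B. bounded_op B \<and> (\<forall>A\<in>M. B \<circ> A = A \<circ> B)}"
    then have "bounded_op A" "A \<circ> T = T \<circ> A" using TM by auto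
    then show "S \<circ> A = A \<circ> S" using S(3) by metis
  qed
  then have "S \<in> M" using M_bicomm by simp
  then show ?thesis using S by blast
qed

lemma quad_pos:
  assumes "Z \<in> M"
  shows "Im (\<tau> (T \<circ> op_adjoint Z \<circ> Z)) = 0 \<and> 0 \<le> Re (\<tau> (T \<circ> op_adjoint Z \<circ> Z))"
  using form_pos[OF TM Tpos M_adj[OF assms]] adj_adj[OF Mb[OF assms]] by simp

lemma L3:
  assumes Z: "Z \<in> M"
  shows "Re (\<tau> (T \<circ> op_adjoint Z \<circ> Z)) \<le> (onorm Z)\<^sup>2"
proof -
  obtain R where R: "R \<in> M" "op_positive R" "R \<circ> R = T" using sqrtT by blast
  have Zb: "bounded_op Z" using Mb[OF Z] .
  have ZA: "op_adjoint Z \<in> M" using M_adj[OF Z] .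
  have RR: "R (R x) = T x" for x using R(3) by (metis comp_apply)
  have e1: "T \<circ> op_adjoint Z \<circ> Z = R \<circ> (R \<circ> op_adjoint Z \<circ> Z)"
    by (simp add: R(3)[symmetric] comp_assoc)
  have m1: "R \<circ> op_adjoint Z \<circ> Z \<in> M" by (intro M_comp R(1) ZA Z)
  have eq: "\<tau> (T \<circ> op_adjoint Z \<circ> Z) = \<tau> (R \<circ> op_adjoint Z \<circ> Z \<circ> R)"
    unfolding e1 by (rule tau_comm[OF R(1) m1])
  define n where "n = (onorm Z)\<^sup>2"
  define G where "G = op_scale (complex_of_real n) T - (R \<circ> op_adjoint Z \<circ> Z \<circ> R)"
  have GM: "G \<in> M" unfolding G_def by (intro M_diff M_scale M_comp TM R(1) ZA Z)
  have Gpos: "op_positive G"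
  proof (rule positiveI[OF Mb[OF GM]])
    fix x
    have a: "cinner x (R (op_adjoint Z (Z (R x)))) = complex_of_real ((norm (Z (R x)))\<^sup>2)"
    proof -
      have "cinner x (R (op_adjoint Z (Z (R x)))) = cinner (R x) (op_adjoint Z (Z (R x)))"
        by (simp add: pos_sa_apply[OF R(2)])
      also have "\<dots> = cinner (Z (R x)) (Z (R x))" by (simp add: adj_prop[OF Zb])
      finally show ?thesis by (simp add: cinner_self_norm)
    qed
    have b: "cinner x (T x) = complex_of_real ((norm (R x))\<^sup>2)"
    proof -
      have "cinner x (T x) = cinner x (R (R x))" by (simp add: RR)
      also have "\<dots> = cinner (R x) (R x)" by (simp add: pos_sa_apply[OF R(2)])
      finally show ?thesis by (simp add: cinner_self_norm)
    qed
    have e: "cinner x (G x) = complex_of_real (n * (norm (R x))\<^sup>2 - (norm (Z (R x)))\<^sup>2)"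
      unfolding G_def by (simp add: cinner_diff_right cinner_scaleC_right a b)
    show "Im (cinner x (G x)) = 0" unfolding e by simp
    have "norm (Z (R x)) \<le> onorm Z * norm (R x)" by (rule op_norm_bound[OF Zb])
    then have "(norm (Z (R x)))\<^sup>2 \<le> (onorm Z * norm (R x))\<^sup>2" by (intro power_mono) auto
    then show "0 \<le> Re (cinner x (G x))" unfolding e n_def by (simp add: power_mult_distrib)
  qed
  have "\<tau> G = complex_of_real n - \<tau> (R \<circ> op_adjoint Z \<circ> Z \<circ> R)"
    unfolding G_def by (simp add: tau_diff M_scale TM M_comp R(1) ZA Z tau_scale T1)
  then have "0 \<le> n - Re (\<tau> (R \<circ> op_adjoint Z \<circ> Z \<circ> R))"
    using tau_pos[OF GM Gpos] by simp
  then show ?thesis unfolding eq n_def by simp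
qed

lemma L2:
  assumes Z: "Z \<in> M"
  shows "Re (\<tau> (T \<circ> op_adjoint Z \<circ> Z)) \<le> onorm T * Re (\<tau> (Z \<circ> op_adjoint Z))"
proof -
  have Zb: "bounded_op Z" using Mb[OF Z] .
  have ZA: "op_adjoint Z \<in> M" using M_adj[OF Z] .
  have m1: "T \<circ> op_adjoint Z \<in> M" by (intro M_comp TM ZA)
  have eq: "\<tau> (T \<circ> op_adjoint Z \<circ> Z) = \<tau> (Z \<circ> T \<circ> op_adjoint Z)"
    using tau_comm[OF m1 Z] by (simp add: comp_assoc)
  define G where "G = op_scale (complex_of_real (onorm T)) (Z \<circ> op_adjoint Z) - (Z \<circ> T \<circ> op_adjoint Z)"
  have GM: "G \<in> M" unfolding G_def by (intro M_diff M_scale M_comp TM ZA Z)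
  have Gpos: "op_positive G"
  proof (rule positiveI[OF Mb[OF GM]])
    fix x
    define y where "y = op_adjoint Z x"
    have a: "cinner x (Z (T y)) = cinner y (T y)" unfolding y_def by (simp add: adj_prop2[OF Zb])
    have b: "cinner x (Z y) = complex_of_real ((norm y)\<^sup>2)"
      unfolding y_def by (simp add: adj_prop2[OF Zb] cinner_self_norm)
    have g: "G x = scaleC (complex_of_real (onorm T)) (Z y) - Z (T y)" unfolding G_def y_def by simp
    have e: "cinner x (G x) = complex_of_real (onorm T * (norm y)\<^sup>2) - cinner y (T y)"
      unfolding g cinner_diff_right cinner_scaleC_right a b by simp
    show "Im (cinner x (G x)) = 0" unfolding e using pos_Im[OF Tpos] by simp
    show "0 \<le> Re (cinner x (G x))" unfolding e using pos_le_onorm[OF Tb, of y] by simp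
  qed
  have "\<tau> G = complex_of_real (onorm T) * \<tau> (Z \<circ> op_adjoint Z) - \<tau> (Z \<circ> T \<circ> op_adjoint Z)"
    unfolding G_def by (simp add: tau_diff M_scale TM M_comp ZA Z tau_scale)
  then have "0 \<le> onorm T * Re (\<tau> (Z \<circ> op_adjoint Z)) - Re (\<tau> (Z \<circ> T \<circ> op_adjoint Z))"
    using tau_pos[OF GM Gpos] by simp
  then show ?thesis unfolding eq by simp
qed

lemma L1:
  assumes Z: "Z \<in> M"
  shows "(Re (\<tau> (T \<circ> op_adjoint Z \<circ> Z)))\<^sup>2
     \<le> Re (\<tau> (T \<circ> T)) * Re (\<tau> ((op_adjoint Z \<circ> Z) \<circ> (op_adjoint Z \<circ> Z)))"
proof -
  have Zb: "bounded_op Z" using Mb[OF Z] .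
  define W where "W = op_adjoint Z \<circ> Z"
  have WM: "W \<in> M" unfolding W_def by (intro M_comp M_adj Z)
  have Wsa: "op_adjoint W = W"
    unfolding W_def by (simp add: adj_comp[OF adj_bounded[OF Zb] Zb] adj_adj[OF Zb])
  have Tsa: "op_adjoint T = T" by (rule pos_selfadj[OF Tpos])
  have "(cmod (\<tau> (id \<circ> W \<circ> op_adjoint T)))\<^sup>2 \<le> Re (\<tau> (id \<circ> T \<circ> op_adjoint T)) * Re (\<tau> (id \<circ> W \<circ> op_adjoint W))"
    by (rule form_cs[OF M_id id_pos TM WM])
  then have c: "(cmod (\<tau> (W \<circ> T)))\<^sup>2 \<le> Re (\<tau> (T \<circ> T)) * Re (\<tau> (W \<circ> W))"
    unfolding Wsa Tsa by simp
  have "\<tau> (W \<circ> T) = \<tau> (T \<circ> op_adjoint Z \<circ> Z)"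
    using tau_comm[OF WM TM] unfolding W_def by (simp add: comp_assoc)
  then have "(Re (\<tau> (T \<circ> op_adjoint Z \<circ> Z)))\<^sup>2 \<le> (cmod (\<tau> (W \<circ> T)))\<^sup>2"
    using abs_Re_le_cmod[of "\<tau> (W \<circ> T)"] by (simp add: power2_le_iff_abs_le)
  then show ?thesis using c unfolding W_def by linarith
qed

end

lemma comp_diff_scale_id:
  assumes "bounded_op (F :: 'a::chilbert \<Rightarrow> 'a)"
  shows "F \<circ> (G - op_scale c id) = (F \<circ> G) - op_scale c F"
  by (rule ext) (simp add: bounded_op_diff[OF assms] bounded_opD(2)[OF assms])

lemma fin_ineq:
  fixes u a b X Y W :: real
  assumes "u\<^sup>2 \<le> a * b" "0 \<le> a" "0 \<le> b" "a \<le> X" "b \<le> Y" "X * Y \<le> W\<^sup>2" "0 \<le> W"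
  shows "u \<le> W"
proof -
  have "a * b \<le> X * Y" using assms by (intro mult_mono) auto
  then have "u\<^sup>2 \<le> W\<^sup>2" using assms by linarith
  then show ?thesis using assms(7) by (simp add: power2_le_iff_abs_le)
qed

context thctx
begin

lemma cov_bound:
  fixes \<alpha> \<beta> :: complex
  assumes A: "A \<in> M" and B: "B \<in> M"
  defines "A' \<equiv> A - op_scale \<alpha> id" and "B' \<equiv> B - op_scale \<beta> id"
  shows "(cmod (\<tau> (T \<circ> A \<circ> B) - \<tau> (T \<circ> A) * \<tau> (T \<circ> B)))\<^sup>2
      \<le> Re (\<tau> (T \<circ> A' \<circ> op_adjoint A')) * Re (\<tau> (T \<circ> op_adjoint B' \<circ> B'))"
proof -
  have A'M: "A' \<in> M" unfolding A'_def by (intro M_diff M_scale M_id A)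
  have B'M: "B' \<in> M" unfolding B'_def by (intro M_diff M_scale M_id B)
  have Ab: "bounded_op A" "bounded_op B" using Mb A B by auto
  define l where "l = \<tau> (T \<circ> A)"
  define C where "C = A - op_scale l id"
  have CM: "C \<in> M" unfolding C_def by (intro M_diff M_scale M_id A)
  have TC: "T \<circ> C = (T \<circ> A) - op_scale l T" unfolding C_def by (rule comp_diff_scale_id[OF Tb])
  have tTC: "\<tau> (T \<circ> C) = 0"
    unfolding TC by (simp add: tau_diff tau_scale M_comp M_scale TM A T1 l_def)
  have TCb: "bounded_op (T \<circ> C)" by (rule Mb[OF M_comp[OF TM CM]])
  have TAb: "bounded_op (T \<circ> A)" by (rule Mb[OF M_comp[OF TM A]])
  have cov: "\<tau> (T \<circ> A \<circ> B) - \<tau> (T \<circ> A) * \<tau> (T \<circ> B) = \<tau> (T \<circ> C \<circ> B')"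
  proof -
    have "T \<circ> C \<circ> B' = (T \<circ> C) \<circ> (B - op_scale \<beta> id)" unfolding B'_def by simp
    also have "\<dots> = ((T \<circ> C) \<circ> B) - op_scale \<beta> (T \<circ> C)" by (rule comp_diff_scale_id[OF TCb])
    also have "(T \<circ> C) \<circ> B = ((T \<circ> A) \<circ> B) - op_scale l (T \<circ> B)"
      unfolding TC by (rule ext) simp
    finally have e: "T \<circ> C \<circ> B' = (((T \<circ> A) \<circ> B) - op_scale l (T \<circ> B)) - op_scale \<beta> (T \<circ> C)" .
    show ?thesis unfolding e
      by (simp add: tau_diff tau_scale tTC M_comp M_scale M_diff TM A B CM l_def)
  qed
  have B'b: "bounded_op B'" by (rule Mb[OF B'M])
  have cs1: "(cmod (\<tau> (T \<circ> C \<circ> B')))\<^sup>2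
     \<le> Re (\<tau> (T \<circ> op_adjoint B' \<circ> B')) * Re (\<tau> (T \<circ> C \<circ> op_adjoint C))"
    using form_cs[OF TM Tpos M_adj[OF B'M] CM] adj_adj[OF B'b] by simp
  \<comment> \<open>variance reduction\<close>
  have A'b: "bounded_op A'" by (rule Mb[OF A'M])
  have AA: "op_adjoint A \<in> M" by (rule M_adj[OF A])
  have adjC: "op_adjoint C = op_adjoint A - op_scale (cnj l) id"
    unfolding C_def by (simp add: adj_diff Ab bounded_op_scale bounded_op_id adj_scale adj_id)
  have adjA': "op_adjoint A' = op_adjoint A - op_scale (cnj \<alpha>) id"
    unfolding A'_def by (simp add: adj_diff Ab bounded_op_scale bounded_op_id adj_scale adj_id)
  have red: "\<tau> (T \<circ> C \<circ> (op_adjoint A - op_scale \<mu> id)) = \<tau> (T \<circ> C \<circ> op_adjoint A)" for \<mu>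
  proof -
    have "T \<circ> C \<circ> (op_adjoint A - op_scale \<mu> id) = ((T \<circ> C) \<circ> op_adjoint A) - op_scale \<mu> (T \<circ> C)"
      using comp_diff_scale_id[OF TCb] by simp
    then show ?thesis by (simp add: tau_diff tau_scale tTC M_comp M_scale TM CM AA)
  qed
  have eqCC: "\<tau> (T \<circ> C \<circ> op_adjoint C) = \<tau> (T \<circ> C \<circ> op_adjoint A')"
    unfolding adjC adjA' red ..
  have cs2: "(cmod (\<tau> (T \<circ> C \<circ> op_adjoint A')))\<^sup>2
     \<le> Re (\<tau> (T \<circ> A' \<circ> op_adjoint A')) * Re (\<tau> (T \<circ> C \<circ> op_adjoint C))"
    by (rule form_cs[OF TM Tpos A'M CM])
  define a where "a = Re (\<tau> (T \<circ> A' \<circ> op_adjoint A'))"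
  define b where "b = Re (\<tau> (T \<circ> op_adjoint B' \<circ> B'))"
  define c where "c = Re (\<tau> (T \<circ> C \<circ> op_adjoint C))"
  have c0: "0 \<le> c" and cIm: "Im (\<tau> (T \<circ> C \<circ> op_adjoint C)) = 0"
    using form_pos[OF TM Tpos CM] unfolding c_def by auto
  have a0: "0 \<le> a" using form_pos[OF TM Tpos A'M] unfolding a_def by auto
  have "c\<^sup>2 \<le> (cmod (\<tau> (T \<circ> C \<circ> op_adjoint C)))\<^sup>2"
    unfolding c_def using abs_Re_le_cmod[of "\<tau> (T \<circ> C \<circ> op_adjoint C)"] by (simp add: power2_le_iff_abs_le)
  also have "\<dots> \<le> a * c" using cs2 unfolding eqCC[symmetric] a_def c_def .
  finally have "c * c \<le> a * c" by (simp add: power2_eq_square)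
  then have ca: "c \<le> a" using c0 by (cases "c = 0") (use a0 in auto)
  have b0: "0 \<le> b" unfolding b_def using quad_pos[OF B'M] by auto
  have "(cmod (\<tau> (T \<circ> C \<circ> B')))\<^sup>2 \<le> b * c" using cs1 unfolding b_def c_def .
  also have "\<dots> \<le> b * a" using ca b0 by (intro mult_left_mono)
  finally show ?thesis unfolding cov a_def b_def by (simp add: mult.commute)
qed

end

lemma powr4_sq: "0 \<le> (w::real) \<Longrightarrow> (w powr (1/4))\<^sup>2 = sqrt w"
proof -
  assume w: "0 \<le> w"
  have "(w powr (1/4))\<^sup>2 = w powr (1/4) * w powr (1/4)" by (simp add: power2_eq_square)
  also have "\<dots> = w powr (1/4 + 1/4)" by (rule powr_add[symmetric])
  also have "(1/4 + 1/4 :: real) = 1/2" by simp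
  finally show ?thesis using w by (simp add: powr_half_sqrt)
qed

lemma sqrt_bound: "(a::real)\<^sup>2 \<le> t * w \<Longrightarrow> 0 \<le> t \<Longrightarrow> 0 \<le> w \<Longrightarrow> a \<le> sqrt t * sqrt w"
  by (metis real_le_rsqrt real_sqrt_mult)

theorem theorem3p9:
  fixes M :: "('h::chilbert \<Rightarrow> 'h) set"
    and \<tau> :: "('h \<Rightarrow> 'h) \<Rightarrow> complex"
    and T A B :: "'h \<Rightarrow> 'h"
    and \<alpha> \<beta> :: complex
  assumes "von_neumann_algebra M"
    and "finite_trace M \<tau>" and "normal_functional M \<tau>"
    and "faithful_functional M \<tau>" and "normalized_functional \<tau>"
    and "T \<in> M" and "op_positive T" and "\<tau> T = 1"
    and "A \<in> M" and "B \<in> M"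
  shows "cmod (\<tau> (T \<circ> A \<circ> B) - \<tau> (T \<circ> A) * \<tau> (T \<circ> B))
           \<le> tr_pnorm \<tau> 4 (A - op_scale \<alpha> id) * tr_pnorm \<tau> 4 (B - op_scale \<beta> id) * tr_pnorm \<tau> 2 T
       \<and> cmod (\<tau> (T \<circ> A \<circ> B) - \<tau> (T \<circ> A) * \<tau> (T \<circ> B))
           \<le> tr_pnorm \<tau> 2 (A - op_scale \<alpha> id) * tr_pnorm \<tau> 2 (B - op_scale \<beta> id) * onorm T
       \<and> cmod (\<tau> (T \<circ> A \<circ> B) - \<tau> (T \<circ> A) * \<tau> (T \<circ> B))
           \<le> onorm (A - op_scale \<alpha> id) * onorm (B - op_scale \<beta> id)"
proof -
  interpret thctx M \<tau> T
    by (intro thctx.intro trctx.intro thctx_axioms.intro) (use assms in auto)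
  define A' where "A' = A - op_scale \<alpha> id"
  define B' where "B' = B - op_scale \<beta> id"
  define u where "u = cmod (\<tau> (T \<circ> A \<circ> B) - \<tau> (T \<circ> A) * \<tau> (T \<circ> B))"
  have A: "A \<in> M" and B: "B \<in> M" using assms by auto
  have A'M: "A' \<in> M" unfolding A'_def by (intro M_diff M_scale M_id A)
  have B'M: "B' \<in> M" unfolding B'_def by (intro M_diff M_scale M_id B)
  have A'b: "bounded_op A'" and B'b: "bounded_op B'" using Mb A'M B'M by auto
  define ZA where "ZA = op_adjoint A'"
  have ZAM: "ZA \<in> M" unfolding ZA_def by (rule M_adj[OF A'M])
  have ZAadj: "op_adjoint ZA = A'" unfolding ZA_def by (rule adj_adj[OF A'b])
  define a where "a = Re (\<tau> (T \<circ> A' \<circ> op_adjoint A'))"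
  define b where "b = Re (\<tau> (T \<circ> op_adjoint B' \<circ> B'))"
  have aZ: "a = Re (\<tau> (T \<circ> op_adjoint ZA \<circ> ZA))" unfolding a_def ZA_def adj_adj[OF A'b] ..
  have cb: "u\<^sup>2 \<le> a * b"
    unfolding u_def a_def b_def A'_def B'_def by (rule cov_bound[OF A B])
  have a0: "0 \<le> a" unfolding aZ using quad_pos[OF ZAM] by auto
  have b0: "0 \<le> b" unfolding b_def using quad_pos[OF B'M] by auto
  have u0: "0 \<le> u" unfolding u_def by simp
  have p3: "u \<le> onorm A' * onorm B'"
  proof (rule fin_ineq[OF cb a0 b0])
    have "a \<le> (onorm ZA)\<^sup>2" unfolding aZ by (rule L3[OF ZAM])
    also have "\<dots> \<le> (onorm A')\<^sup>2"
      unfolding ZA_def by (intro power_mono onorm_adj_le A'b onorm_nonneg'[OF adj_bounded[OF A'b]])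
    finally show "a \<le> (onorm A')\<^sup>2" .
    show "b \<le> (onorm B')\<^sup>2" unfolding b_def by (rule L3[OF B'M])
    show "(onorm A')\<^sup>2 * (onorm B')\<^sup>2 \<le> (onorm A' * onorm B')\<^sup>2" by (simp add: power_mult_distrib)
    show "0 \<le> onorm A' * onorm B'" using onorm_nonneg'[OF A'b] onorm_nonneg'[OF B'b] by simp
  qed
  have nA0: "0 \<le> Re (\<tau> (op_adjoint A' \<circ> A'))"
    using form_pos[OF M_id id_pos ZAM] unfolding ZA_def adj_adj[OF A'b] by simp
  have nB0: "0 \<le> Re (\<tau> (op_adjoint B' \<circ> B'))"
    using form_pos[OF M_id id_pos M_adj[OF B'M]] adj_adj[OF B'b] by simp
  have t2A: "tr_pnorm \<tau> 2 A' = sqrt (Re (\<tau> (op_adjoint A' \<circ> A')))" by (rule tr_pnorm2[where \<tau>=\<tau>, OF A'b nA0])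
  have t2B: "tr_pnorm \<tau> 2 B' = sqrt (Re (\<tau> (op_adjoint B' \<circ> B')))" by (rule tr_pnorm2[where \<tau>=\<tau>, OF B'b nB0])
  have oT: "0 \<le> onorm T" by (rule onorm_nonneg'[OF Tb])
  have p2: "u \<le> tr_pnorm \<tau> 2 A' * tr_pnorm \<tau> 2 B' * onorm T"
  proof (rule fin_ineq[OF cb a0 b0])
    have "a \<le> onorm T * Re (\<tau> (ZA \<circ> op_adjoint ZA))" unfolding aZ by (rule L2[OF ZAM])
    then show "a \<le> onorm T * Re (\<tau> (op_adjoint A' \<circ> A'))" unfolding ZA_def adj_adj[OF A'b] .
    have "b \<le> onorm T * Re (\<tau> (B' \<circ> op_adjoint B'))" unfolding b_def by (rule L2[OF B'M])
    also have "\<tau> (B' \<circ> op_adjoint B') = \<tau> (op_adjoint B' \<circ> B')" by (rule tau_comm[OF B'M M_adj[OF B'M]])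
    finally show "b \<le> onorm T * Re (\<tau> (op_adjoint B' \<circ> B'))" .
    show "onorm T * Re (\<tau> (op_adjoint A' \<circ> A')) * (onorm T * Re (\<tau> (op_adjoint B' \<circ> B')))
        \<le> (tr_pnorm \<tau> 2 A' * tr_pnorm \<tau> 2 B' * onorm T)\<^sup>2"
      unfolding t2A t2B using nA0 nB0 by (simp add: power_mult_distrib power2_eq_square mult_ac)
    show "0 \<le> tr_pnorm \<tau> 2 A' * tr_pnorm \<tau> 2 B' * onorm T" unfolding t2A t2B
      by (intro mult_nonneg_nonneg oT real_sqrt_ge_zero nA0 nB0)
  qed
  define t where "t = Re (\<tau> (T \<circ> T))"
  define wA where "wA = Re (\<tau> ((op_adjoint A' \<circ> A') \<circ> (op_adjoint A' \<circ> A')))"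
  define wB where "wB = Re (\<tau> ((op_adjoint B' \<circ> B') \<circ> (op_adjoint B' \<circ> B')))"
  have Tsa: "op_adjoint T = T" by (rule pos_selfadj[OF Tpos])
  have t0: "0 \<le> t" unfolding t_def using form_pos[OF M_id id_pos TM] unfolding Tsa by simp
  have WsaA: "op_adjoint (op_adjoint A' \<circ> A') = op_adjoint A' \<circ> A'"
    by (simp add: adj_comp[OF adj_bounded[OF A'b] A'b] adj_adj[OF A'b])
  have WsaB: "op_adjoint (op_adjoint B' \<circ> B') = op_adjoint B' \<circ> B'"
    by (simp add: adj_comp[OF adj_bounded[OF B'b] B'b] adj_adj[OF B'b])
  have WAM: "op_adjoint A' \<circ> A' \<in> M" by (intro M_comp M_adj A'M)
  have WBM: "op_adjoint B' \<circ> B' \<in> M" by (intro M_comp M_adj B'M)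
  have wA0: "0 \<le> wA" unfolding wA_def using form_pos[OF M_id id_pos WAM] unfolding WsaA by simp
  have wB0: "0 \<le> wB" unfolding wB_def using form_pos[OF M_id id_pos WBM] unfolding WsaB by simp
  have t2T: "tr_pnorm \<tau> 2 T = sqrt t" unfolding t_def
    using tr_pnorm2[where \<tau>=\<tau>, OF Tb] t0 unfolding t_def Tsa by simp
  have t4A: "tr_pnorm \<tau> 4 A' = wA powr (1/4)" unfolding wA_def by (rule tr_pnorm4[OF A'b])
  have t4B: "tr_pnorm \<tau> 4 B' = wB powr (1/4)" unfolding wB_def by (rule tr_pnorm4[OF B'b])
  have cycA: "\<tau> ((op_adjoint ZA \<circ> ZA) \<circ> (op_adjoint ZA \<circ> ZA)) = \<tau> ((op_adjoint A' \<circ> A') \<circ> (op_adjoint A' \<circ> A'))"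
  proof -
    have m: "op_adjoint A' \<circ> A' \<circ> op_adjoint A' \<in> M" by (intro M_comp M_adj A'M)
    have "\<tau> (A' \<circ> (op_adjoint A' \<circ> A' \<circ> op_adjoint A')) = \<tau> ((op_adjoint A' \<circ> A' \<circ> op_adjoint A') \<circ> A')"
      by (rule tau_comm[OF A'M m])
    then show ?thesis unfolding ZA_def adj_adj[OF A'b] by (simp add: comp_assoc)
  qed
  have p1: "u \<le> tr_pnorm \<tau> 4 A' * tr_pnorm \<tau> 4 B' * tr_pnorm \<tau> 2 T"
  proof (rule fin_ineq[OF cb a0 b0])
    have "a\<^sup>2 \<le> t * wA" unfolding aZ t_def wA_def cycA[symmetric] by (rule L1[OF ZAM])
    then show "a \<le> sqrt t * sqrt wA" using t0 wA0 by (rule sqrt_bound)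
    have "b\<^sup>2 \<le> t * wB" unfolding b_def t_def wB_def by (rule L1[OF B'M])
    then show "b \<le> sqrt t * sqrt wB" using t0 wB0 by (rule sqrt_bound)
    show "sqrt t * sqrt wA * (sqrt t * sqrt wB) \<le> (tr_pnorm \<tau> 4 A' * tr_pnorm \<tau> 4 B' * tr_pnorm \<tau> 2 T)\<^sup>2"
    proof -
      have r: "(tr_pnorm \<tau> 4 A' * tr_pnorm \<tau> 4 B' * tr_pnorm \<tau> 2 T)\<^sup>2 = sqrt wA * sqrt wB * t"
        unfolding t4A t4B t2T power_mult_distrib powr4_sq[OF wA0] powr4_sq[OF wB0] using t0 by simp
      have l: "sqrt t * sqrt wA * (sqrt t * sqrt wB) = sqrt wA * sqrt wB * (sqrt t * sqrt t)"
        by (simp only: mult_ac)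
      have st: "sqrt t * sqrt t = t" using t0 by simp
      show ?thesis unfolding r l st by simp
    qed
    show "0 \<le> tr_pnorm \<tau> 4 A' * tr_pnorm \<tau> 4 B' * tr_pnorm \<tau> 2 T" unfolding t4A t4B t2T
      by (intro mult_nonneg_nonneg real_sqrt_ge_zero t0 powr_ge_zero)
  qed
  show ?thesis using p1 p2 p3 unfolding u_def A'_def B'_def by blast
qed

end
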